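(* For every integer $k\ge 2$, $$\sum_{n\geq 0}C_{\Pi_{n,k}}(x)\,t^{n}=\frac{1}{1-\bigl(k+(k-1)x\bigr)t-(1+x)t^{2}}.$$
   Context: For an integer $k\ge 2$, a $k$-Pell string is a finite word over the alphabet $\{0,1,\ldots,k-1,kk\}$, i.e. a word over $\{0,1,\ldots,k\}$ in which every maximal run of the letter $k$ has even length. For $n\ge 0$, the $k$-Pell graph $\Pi_{n,k}$ has as vertices all $k$-Pell strings of length $n$, and two vertices are adjacent if one is obtained from the other either by replacing a single letter $i$ by $i+1$ (or vice versa) for some $i\in\{0,1,\ldots,k-2\}$, or by replacing one factor $(k-1)(k-1)$ by $kk$ (or vice versa), in such a way that the resulting string is again a $k$-Pell string. The cube polynomial of a graph $G$ is $C_G(x)=\sum_{i\ge 0}c_i(G)x^i$, where $c_i(G)$ is the number of induced subgraphs of $G$ isomorphic to the hypercube $Q_i$. *)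

theory Defs
  imports "HOL-Computational_Algebra.Polynomial" "HOL-Computational_Algebra.Formal_Power_Series"
begin

text \<open>k-Pell strings of length n: words over the alphabet {0,...,k-1,kk},
  i.e. concatenations of blocks [i] (i < k) and [k,k].\<close>
definition pell_block :: "nat \<Rightarrow> nat list \<Rightarrow> bool" where
  "pell_block k b \<longleftrightarrow> (\<exists>i<k. b = [i]) \<or> b = [k, k]"

definition pell_strings :: "nat \<Rightarrow> nat \<Rightarrow> nat list set" where
  "pell_strings n k = {w. length w = n \<and>
      (\<exists>bs. w = concat bs \<and> (\<forall>b\<in>set bs. pell_block k b))}"

definition pell_step :: "nat \<Rightarrow> nat list \<Rightarrow> nat list \<Rightarrow> bool" where
  "pell_step k u v \<longleftrightarrow>
     (\<exists>a b i. i \<le> k - 2 \<and> u = a @ [i] @ b \<and> v = a @ [Suc i] @ b) \<or>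
     (\<exists>a b. u = a @ [k - 1, k - 1] @ b \<and> v = a @ [k, k] @ b)"

definition pell_adj :: "nat \<Rightarrow> nat list \<Rightarrow> nat list \<Rightarrow> bool" where
  "pell_adj k u v \<longleftrightarrow> pell_step k u v \<or> pell_step k v u"

definition cube_verts :: "nat \<Rightarrow> bool list set" where
  "cube_verts i = {w. length w = i}"

definition cube_adj :: "bool list \<Rightarrow> bool list \<Rightarrow> bool" where
  "cube_adj u v \<longleftrightarrow> length u = length v \<and>
      card {j. j < length u \<and> u ! j \<noteq> v ! j} = 1"

definition cube_count :: "'a set \<Rightarrow> ('a \<Rightarrow> 'a \<Rightarrow> bool) \<Rightarrow> nat \<Rightarrow> nat" where
  "cube_count V adj i = card {S. S \<subseteq> V \<and>
      (\<exists>f. bij_betw f (cube_verts i) S \<and>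
           (\<forall>u\<in>cube_verts i. \<forall>v\<in>cube_verts i. adj (f u) (f v) \<longleftrightarrow> cube_adj u v))}"

text \<open>Cube polynomial C_G(x) = sum_i c_i(G) x^i (for a finite graph, c_i = 0 for i > |V|).\<close>
definition cube_poly :: "'a set \<Rightarrow> ('a \<Rightarrow> 'a \<Rightarrow> bool) \<Rightarrow> int poly" where
  "cube_poly V adj = (\<Sum>i\<le>card V. monom (int (cube_count V adj i)) i)"

definition pell_cube_poly :: "nat \<Rightarrow> nat \<Rightarrow> int poly" where
  "pell_cube_poly n k = cube_poly (pell_strings n k) (pell_adj k)"

end

theory Submission
  imports Defs
begin


fun ispell :: "nat \<Rightarrow> nat list \<Rightarrow> bool" where
  "ispell k [] = True"
| "ispell k [x] = (x < k)"
| "ispell k (x#y#w) = (if x < k then ispell k (y#w) else x = k \<and> y = k \<and> ispell k w)"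

lemma ispell_Cons: "ispell k (x#w) \<longleftrightarrow> (x < k \<and> ispell k w) \<or> (x = k \<and> (\<exists>w'. w = k#w' \<and> ispell k w'))"
  by (cases w) auto

lemma ispell_append_block: "pell_block k b \<Longrightarrow> ispell k (b @ w) \<longleftrightarrow> ispell k w"
  unfolding pell_block_def by (auto simp: ispell_Cons)

lemma ispell_concat: "\<forall>b\<in>set bs. pell_block k b \<Longrightarrow> ispell k (concat bs)"
  by (induction bs) (auto simp: ispell_append_block)

lemma ispell_ex: "ispell k w \<Longrightarrow> \<exists>bs. w = concat bs \<and> (\<forall>b\<in>set bs. pell_block k b)"
proof (induction k w rule: ispell.induct)
  case (1 k)
  then show ?case by (intro exI[of _ "[]"]) auto
next
  case (2 k x)
  then show ?case by (intro exI[of _ "[[x]]"]) (auto simp: pell_block_def)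
next
  case (3 k x y w)
  show ?case
  proof (cases "x < k")
    case True
    then obtain bs where "y#w = concat bs" "\<forall>b\<in>set bs. pell_block k b" using 3 by auto
    then show ?thesis using True by (intro exI[of _ "[x]#bs"]) (auto simp: pell_block_def)
  next
    case False
    then obtain bs where "w = concat bs" "\<forall>b\<in>set bs. pell_block k b" "x = k" "y = k" using 3 by auto
    then show ?thesis by (intro exI[of _ "[k,k]#bs"]) (auto simp: pell_block_def)
  qed
qed

lemma pell_strings_eq: "pell_strings n k = {w. length w = n \<and> ispell k w}"
  unfolding pell_strings_def using ispell_ex ispell_concat by blast

lemma step_Nil1: "\<not> pell_step k [] v"
  by (auto simp: pell_step_def)

lemma step_Nil2: "\<not> pell_step k u []"
  by (auto simp: pell_step_def)

lemma step_Cons: "pell_step k (x#u) (y#v) \<longleftrightarrow>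
   (x = y \<and> pell_step k u v) \<or> (u = v \<and> x \<le> k-2 \<and> y = Suc x) \<or>
   (x = k-1 \<and> y = k \<and> (\<exists>r. u = (k-1)#r \<and> v = k#r))" (is "?L \<longleftrightarrow> ?R")
proof
  assume L: ?L
  show ?R
  proof (cases "\<exists>a b i. i \<le> k - 2 \<and> x#u = a @ [i] @ b \<and> y#v = a @ [Suc i] @ b")
    case True
    then obtain a b i where h: "i \<le> k - 2" "x # u = a @ [i] @ b" "y # v = a @ [Suc i] @ b" by blast
    show ?R
    proof (cases a)
      case Nil then show ?thesis using h by auto
    next
      case (Cons c a') then show ?thesis using h unfolding pell_step_def by auto
    qed
  next
    case False
    then obtain a b where h: "x # u = a @ [k - 1, k - 1] @ b" "y # v = a @ [k, k] @ b"
      using L unfolding pell_step_def by blast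
    show ?R
    proof (cases a)
      case Nil then show ?thesis using h by auto
    next
      case (Cons c a') then show ?thesis using h unfolding pell_step_def by auto
    qed
  qed
next
  assume ?R
  then show ?L
  proof (elim disjE exE conjE)
    assume "x = y" "pell_step k u v"
    then show ?L unfolding pell_step_def
      by (metis append_Cons)
  next
    assume "u = v" "x \<le> k - 2" "y = Suc x"
    then show ?L unfolding pell_step_def by (metis append_Cons append_Nil)
  next
    fix r assume "x = k - 1" "y = k" "u = (k - 1) # r" "v = k # r"
    then show ?L unfolding pell_step_def by (metis append_Cons append_Nil)
  qed
qed

lemma step_same: "k \<ge> 1 \<Longrightarrow> pell_step k (x#u) (x#v) \<longleftrightarrow> pell_step k u v"
  by (auto simp: step_Cons)


definition A :: "nat \<Rightarrow> (nat\<times>nat) set" where "A x = (\<lambda>j. (0,j)) ` {1..x}"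
definition sh :: "(nat\<times>nat) set \<Rightarrow> (nat\<times>nat) set" where "sh Y = (\<lambda>(p,j). (Suc p, j)) ` Y"
definition hd0 :: "(nat\<times>nat) set \<Rightarrow> nat set" where "hd0 X = {j. (0,j) \<in> X}"
definition tl1 :: "(nat\<times>nat) set \<Rightarrow> (nat\<times>nat) set" where "tl1 X = {(p,j). (Suc p, j) \<in> X}"

fun g :: "nat \<Rightarrow> nat list \<Rightarrow> (nat\<times>nat) set" where
  "g k [] = {}"
| "g k (x#w) = (if x < k then A x \<union> sh (g k w)
     else insert (0,k) (A (k-1)) \<union> sh (A (k-1) \<union> sh (g k (tl w))))"

lemma mem_sh: "(p,j) \<in> sh Y \<longleftrightarrow> (\<exists>q. p = Suc q \<and> (q,j) \<in> Y)"
  by (auto simp: sh_def)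

lemma hd0_A[simp]: "hd0 (A x) = {1..x}" by (auto simp: hd0_def A_def)
lemma tl1_A[simp]: "tl1 (A x) = {}" by (auto simp: tl1_def A_def)
lemma hd0_sh[simp]: "hd0 (sh Y) = {}" by (auto simp: hd0_def sh_def)
lemma tl1_sh[simp]: "tl1 (sh Y) = Y" by (auto simp: tl1_def sh_def)
lemma hd0_Un[simp]: "hd0 (X \<union> Y) = hd0 X \<union> hd0 Y" by (auto simp: hd0_def)
lemma tl1_Un[simp]: "tl1 (X \<union> Y) = tl1 X \<union> tl1 Y" by (auto simp: tl1_def)
lemma hd0_Diff[simp]: "hd0 (X - Y) = hd0 X - hd0 Y" by (auto simp: hd0_def)
lemma tl1_Diff[simp]: "tl1 (X - Y) = tl1 X - tl1 Y" by (auto simp: tl1_def)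
lemma hd0_Int[simp]: "hd0 (X \<inter> Y) = hd0 X \<inter> hd0 Y" by (auto simp: hd0_def)
lemma tl1_Int[simp]: "tl1 (X \<inter> Y) = tl1 X \<inter> tl1 Y" by (auto simp: tl1_def)
lemma hd0_insert0[simp]: "hd0 (insert (0,j) X) = insert j (hd0 X)" by (auto simp: hd0_def)
lemma tl1_insert0[simp]: "tl1 (insert (0,j) X) = tl1 X" by (auto simp: tl1_def)
lemma hd0_insertS[simp]: "hd0 (insert (Suc p,j) X) = hd0 X" by (auto simp: hd0_def)
lemma tl1_insertS[simp]: "tl1 (insert (Suc p,j) X) = insert (p,j) (tl1 X)" by (auto simp: tl1_def)
lemma hd0_empty[simp]: "hd0 {} = {}" by (auto simp: hd0_def)
lemma tl1_empty[simp]: "tl1 {} = {}" by (auto simp: tl1_def)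

lemma set_eq_hd0_tl1: "X = Y \<longleftrightarrow> hd0 X = hd0 Y \<and> tl1 X = tl1 Y"
proof
  assume h: "hd0 X = hd0 Y \<and> tl1 X = tl1 Y"
  show "X = Y"
  proof (rule set_eqI)
    fix z :: "nat \<times> nat"
    obtain p j where z: "z = (p,j)" by fastforce
    show "z \<in> X \<longleftrightarrow> z \<in> Y"
      using h unfolding z by (cases p) (auto simp: hd0_def tl1_def set_eq_iff)
  qed
qed auto

lemma decomp: "X = (Pair 0) ` hd0 X \<union> sh (tl1 X)"
proof (rule set_eqI)
  fix z :: "nat \<times> nat"
  obtain p j where z: "z = (p,j)" by fastforce
  show "z \<in> X \<longleftrightarrow> z \<in> (Pair 0) ` hd0 X \<union> sh (tl1 X)"
    unfolding z by (cases p) (auto simp: hd0_def tl1_def sh_def)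
qed

lemma hd0_Pair[simp]: "hd0 ((Pair 0) ` Z) = Z" by (auto simp: hd0_def)
lemma tl1_Pair[simp]: "tl1 ((Pair 0) ` Z) = {}" by (auto simp: tl1_def)

lemma sh_Un: "sh (X \<union> Y) = sh X \<union> sh Y" by (auto simp: sh_def)
lemma sh_inj: "sh X = sh Y \<longleftrightarrow> X = Y" by (metis tl1_sh)

lemma g_lt[simp]: "x < k \<Longrightarrow> g k (x#w) = A x \<union> sh (g k w)" by simp
lemma g_kk[simp]: "k \<ge> 1 \<Longrightarrow> g k (k#k#w) = insert (0,k) (A (k-1)) \<union> sh (g k ((k-1)#w))"
  by simp
declare g.simps(2)[simp del]

lemma hd0_g_lt[simp]: "x < k \<Longrightarrow> hd0 (g k (x#w)) = {1..x}" by simp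
lemma tl1_g_lt[simp]: "x < k \<Longrightarrow> tl1 (g k (x#w)) = g k w" by simp
lemma hd0_g_kk[simp]: "k \<ge> 1 \<Longrightarrow> hd0 (g k (k#k#w)) = {1..k}"
  by (auto simp: g_kk)
lemma tl1_g_kk[simp]: "k \<ge> 1 \<Longrightarrow> tl1 (g k (k#k#w)) = g k ((k-1)#w)"
  by (simp only: g_kk) simp

lemma finite_A[simp]: "finite (A x)" by (simp add: A_def)
lemma finite_sh[simp]: "finite (sh Y) \<longleftrightarrow> finite Y"
  unfolding sh_def by (rule finite_image_iff) (auto simp: inj_on_def)

lemma finite_g: "finite (g k w)"
  by (induction k w rule: g.induct) (auto simp: g.simps)

lemma ispell_cases: "ispell k v \<Longrightarrow> v = [] \<or> (\<exists>y v1. v = y#v1 \<and> y < k \<and> ispell k v1) \<or> (\<exists>v1. v = k#k#v1 \<and> ispell k v1)"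
  by (cases v) (auto simp: ispell_Cons)

lemma hd0_g_pell: "k \<ge> 1 \<Longrightarrow> ispell k v \<Longrightarrow> v \<noteq> [] \<Longrightarrow> hd0 (g k v) = {1..hd v}"
  using ispell_cases[of k v] by auto

lemma atLeast1_eq: "{1..a::nat} = {1..b} \<longleftrightarrow> a = b"
proof
  assume eq: "{1..a::nat} = {1..b}"
  show "a = b"
  proof (rule ccontr)
    assume "a \<noteq> b"
    then have "a < b \<or> b < a" by auto
    then show False
    proof
      assume "a < b" then have "b \<in> {1..b}" "b \<notin> {1..a}" by auto
      then show False using eq by blast
    next
      assume "b < a" then have "a \<in> {1..a}" "a \<notin> {1..b}" by auto
      then show False using eq by blast
    qed
  qed
qed simp

lemma g_inj: "k \<ge> 1 \<Longrightarrow> ispell k u \<Longrightarrow> ispell k v \<Longrightarrow> length u = length v \<Longrightarrow> g k u = g k v \<Longrightarrow> u = v"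
proof (induction "length u" arbitrary: u v rule: less_induct)
  case less
  show ?case
  proof (cases u)
    case Nil then show ?thesis using less by auto
  next
    case (Cons x u1)
    then obtain y v1 where v: "v = y#v1" using less by (cases v) auto
    have "hd0 (g k u) = hd0 (g k v)" using less by simp
    moreover have "hd0 (g k u) = {1..x}" using hd0_g_pell[of k u] less Cons by simp
    moreover have "hd0 (g k v) = {1..y}" using hd0_g_pell[of k v] less v by simp
    ultimately have xy: "x = y" by (metis atLeast1_eq)
    show ?thesis
    proof (cases "x < k")
      case True
      then have "g k u1 = g k v1" using less Cons v xy by (metis tl1_g_lt)
      moreover have "ispell k u1" "ispell k v1" using less Cons v xy True by (auto simp: ispell_Cons)
      ultimately show ?thesis using less Cons v xy by auto
    next
      case False
      then obtain u2 v2 where u2: "u = k#k#u2" "ispell k u2" and v2: "v = k#k#v2" "ispell k v2"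
        using less Cons v xy by (auto simp: ispell_Cons)
      have "g k ((k-1)#u2) = g k ((k-1)#v2)" using less u2 v2 by (metis tl1_g_kk)
      moreover have "ispell k ((k-1)#u2)" "ispell k ((k-1)#v2)" using u2 v2 less by (auto simp: ispell_Cons)
      moreover have "length ((k-1)#u2) < length u" "length ((k-1)#u2) = length ((k-1)#v2)"
        using u2 v2 less.prems by auto
      ultimately have "(k-1)#u2 = (k-1)#v2"
        using less.hyps[of "(k-1)#u2" "(k-1)#v2"] less.prems(1) by blast
      then show ?thesis using u2 v2 by simp
    qed
  qed
qed

lemma in_A: "(p,j) \<in> A x \<longleftrightarrow> p = 0 \<and> 1 \<le> j \<and> j \<le> x" by (auto simp: A_def)
lemma sh_insert: "sh (insert (p,j) Y) = insert (Suc p, j) (sh Y)" by (auto simp: sh_def)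
lemma A_Suc: "A (Suc x) = insert (0, Suc x) (A x)" by (auto simp: A_def)
lemma Suc_in_sh[simp]: "(Suc p, j) \<in> sh Y \<longleftrightarrow> (p,j) \<in> Y" by (auto simp: sh_def)
lemma zero_in_sh[simp]: "(0, j) \<notin> sh Y" by (auto simp: sh_def)

lemma step_g: "k \<ge> 2 \<Longrightarrow> ispell k u \<Longrightarrow> ispell k v \<Longrightarrow> pell_step k u v \<Longrightarrow>
   \<exists>c. c \<notin> g k u \<and> g k v = insert c (g k u)"
proof (induction "length u" arbitrary: u v rule: less_induct)
  case less
  obtain x u1 where u: "u = x#u1" using less step_Nil1 by (cases u) auto
  obtain y v1 where v: "v = y#v1" using less step_Nil2 by (cases v) auto
  have st: "(x = y \<and> pell_step k u1 v1) \<or> (u1 = v1 \<and> x \<le> k-2 \<and> y = Suc x) \<or>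
   (x = k-1 \<and> y = k \<and> (\<exists>r. u1 = (k-1)#r \<and> v1 = k#r))" using less u v step_Cons by blast
  have k1: "k \<ge> 1" "k - 1 < k" using less by auto
  from st show ?case
  proof (elim disjE conjE exE)
    assume xy: "x = y" and s1: "pell_step k u1 v1"
    show ?thesis
    proof (cases "x < k")
      case True
      have "ispell k u1" "ispell k v1" using less.prems u v xy True by (auto simp: ispell_Cons)
      moreover have "length u1 < length u" using u by simp
      ultimately obtain c where c: "c \<notin> g k u1" "g k v1 = insert c (g k u1)"
        using less.hyps[of u1 v1] less.prems(1) s1 by blast
      obtain p j where pj: "c = (p,j)" by fastforce
      have gu: "g k u = A x \<union> sh (g k u1)" using True u by simp
      have gv: "g k v = A x \<union> sh (g k v1)" using True v xy by simp
      show ?thesis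
        apply (rule exI[of _ "(Suc p, j)"])
        using c pj gu gv by (simp add: sh_insert in_A)
    next
      case False
      then obtain u2 v2 where u2: "u = k#k#u2" "ispell k u2" and v2: "v = k#k#v2" "ispell k v2"
        using less.prems u v xy by (auto simp: ispell_Cons)
      have "pell_step k (k#u2) (k#v2)" using s1 u2 v2 u v by simp
      then have "pell_step k u2 v2" using less.prems(1) by (auto simp: step_Cons)
      then have "pell_step k ((k-1)#u2) ((k-1)#v2)" by (simp add: step_Cons)
      moreover have "ispell k ((k-1)#u2)" "ispell k ((k-1)#v2)" using u2 v2 k1 by (auto simp: ispell_Cons)
      moreover have "length ((k-1)#u2) < length u" using u2 by simp
      ultimately obtain c where c: "c \<notin> g k ((k-1)#u2)" "g k ((k-1)#v2) = insert c (g k ((k-1)#u2))"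
        using less.hyps[of "(k-1)#u2" "(k-1)#v2"] less.prems(1) by blast
      obtain p j where pj: "c = (p,j)" by fastforce
      have gu: "g k u = insert (0,k) (A (k-1)) \<union> sh (g k ((k-1)#u2))" using u2 k1 by simp
      have gv: "g k v = insert (0,k) (A (k-1)) \<union> sh (g k ((k-1)#v2))" using v2 k1 by simp
      show ?thesis
        apply (rule exI[of _ "(Suc p, j)"])
        using c pj gu gv by (simp add: sh_insert in_A)
    qed
  next
    assume h: "u1 = v1" "x \<le> k - 2" "y = Suc x"
    then have xk: "x < k" "Suc x < k" using less by auto
    have gu: "g k u = A x \<union> sh (g k u1)" using xk u by simp
    have gv: "g k v = insert (0, Suc x) (A x) \<union> sh (g k u1)" using xk v h by (simp add: A_Suc)
    show ?thesis
      apply (intro exI[of _ "(0, Suc x)"])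
      using gu gv by (simp add: in_A)
  next
    fix r assume h: "x = k - 1" "y = k" "u1 = (k - 1) # r" "v1 = k # r"
    have gu: "g k u = A (k-1) \<union> sh (g k ((k-1)#r))" using h u k1 by simp
    have gv: "g k v = insert (0,k) (A (k-1)) \<union> sh (g k ((k-1)#r))" using h v k1 by simp
    show ?thesis
      apply (intro exI[of _ "(0, k)"])
      using gu gv k1 by (simp add: in_A)
  qed
qed


definition sd :: "'a set \<Rightarrow> 'a set \<Rightarrow> 'a set" where "sd X Y = (X - Y) \<union> (Y - X)"

lemma sd_assoc: "sd (sd X Y) Z = sd X (sd Y Z)" by (auto simp: sd_def)
lemma sd_empty[simp]: "sd X {} = X" by (auto simp: sd_def)
lemma sd_self[simp]: "sd X X = {}" by (auto simp: sd_def)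
lemma sd_cancel: "sd X P = sd X Q \<Longrightarrow> P = Q" by (auto simp: sd_def set_eq_iff)
lemma sd_single: "y \<notin> Y \<Longrightarrow> sd Y {y} = insert y Y" by (auto simp: sd_def)
lemma sd_disj: "Y \<inter> W = {} \<Longrightarrow> sd Y W = Y \<union> W" by (auto simp: sd_def)

lemma diffset_upd: "j < length u \<Longrightarrow> u!j \<noteq> b \<Longrightarrow>
   {i. i < length u \<and> u!i \<noteq> (u[j:=b])!i} = {j}"
  by (auto simp: nth_list_update split: if_splits)

lemma cube_adj_upd: "j < length u \<Longrightarrow> u!j \<noteq> b \<Longrightarrow> cube_adj u (u[j:=b])"
  unfolding cube_adj_def using diffset_upd[of j u b] by simp

lemma cube_adj_sym: "cube_adj u v \<Longrightarrow> cube_adj v u"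
proof -
  assume H: "cube_adj u v"
  then have "length u = length v" by (simp add: cube_adj_def)
  moreover have eq: "{j. j < length v \<and> v ! j \<noteq> u ! j} = {j. j < length u \<and> u ! j \<noteq> v ! j}"
    using \<open>length u = length v\<close> by auto
  moreover have "card {j. j < length u \<and> u ! j \<noteq> v ! j} = 1" using H unfolding cube_adj_def by blast
  ultimately show ?thesis unfolding cube_adj_def
    using conjI[OF sym[OF \<open>length u = length v\<close>]] by (metis eq)
qed

lemma face:
  fixes h :: "bool list \<Rightarrow> 'c set"
  assumes inj: "inj_on h (cube_verts d)"
   and adj: "\<And>u v. u \<in> cube_verts d \<Longrightarrow> v \<in> cube_verts d \<Longrightarrow> cube_adj u v \<Longrightarrow> \<exists>a. h v = sd (h u) {a}"
  shows "\<exists>c. inj_on c {..<d} \<and>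
     (\<forall>u\<in>cube_verts d. h u = sd (h (replicate d False)) (c ` {j. j<d \<and> u!j}))"
proof -
  define z where "z = replicate d False"
  define e where "e j = z[j:=True]" for j
  have zin: "z \<in> cube_verts d" by (simp add: z_def cube_verts_def)
  have ein: "e j \<in> cube_verts d" for j by (simp add: e_def z_def cube_verts_def)
  have adjz: "j < d \<Longrightarrow> cube_adj z (e j)" for j
    unfolding e_def by (rule cube_adj_upd) (auto simp: z_def)
  define c where "c j = (SOME a. h (e j) = sd (h z) {a})" for j
  have cj: "h (e j) = sd (h z) {c j}" if "j < d" for j
    unfolding c_def by (rule someI_ex) (use adj[OF zin ein adjz[OF that]] in blast)
  have cinj: "inj_on c {..<d}"
  proof (rule inj_onI)
    fix j l assume jl: "j \<in> {..<d}" "l \<in> {..<d}" "c j = c l"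
    then have "h (e j) = h (e l)" using cj by simp
    then have "e j = e l" using inj ein by (meson inj_onD)
    then have "(e j)!j = (e l)!j" by simp
    then show "j = l" using jl by (cases "j = l") (simp_all add: e_def z_def nth_list_update split: if_splits)
  qed
  define T where "T u = {j. j<d \<and> u!j}" for u
  have finT: "finite (T u)" for u by (simp add: T_def)
  have main: "u \<in> cube_verts d \<Longrightarrow> h u = sd (h z) (c ` T u)" for u
  proof (induction "card (T u)" arbitrary: u rule: less_induct)
    case less
    have lu: "length u = d" using less.prems by (simp add: cube_verts_def)
    consider "card (T u) = 0" | "card (T u) = 1" | "card (T u) \<ge> 2" by linarith
    then show ?case
    proof cases
      case 1
      then have "T u = {}" using finT by simp
      then have "u = z" using lu by (intro nth_equalityI) (auto simp: T_def z_def)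
      then show ?thesis using \<open>T u = {}\<close> by simp
    next
      case 2
      then obtain j where j: "T u = {j}" by (meson card_1_singletonE)
      then have jd: "j < d" by (auto simp: T_def)
      have ui: "u!i = (i = j)" if "i < d" for i
      proof -
        have "i \<in> T u \<longleftrightarrow> i = j" using j by simp
        then show ?thesis using that by (simp add: T_def)
      qed
      have "u = e j"
      proof (rule nth_equalityI)
        show "length u = length (e j)" using lu by (simp add: e_def z_def)
        fix i assume "i < length u"
        then show "u!i = e j ! i" using ui lu jd by (simp add: e_def z_def nth_list_update split: if_splits)
      qed
      then show ?thesis using cj[OF jd] j by simp
    next
      case 3
      then have "T u \<noteq> {}" by auto
      then obtain j where j1: "j \<in> T u" by blast
      have "card (T u - {j}) = card (T u) - 1" using j1 finT by (simp add: card_Diff_singleton)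
      then have "card (T u - {j}) \<ge> 1" using 3 by linarith
      then have "T u - {j} \<noteq> {}" by (intro notI) simp
      then obtain l where "l \<in> T u - {j}" by blast
      then have jl: "j \<in> T u" "l \<in> T u" "j \<noteq> l" using j1 by auto
      have jd: "j < d" "u!j" "l < d" "u!l" using jl by (auto simp: T_def)
      define u1 where "u1 = u[j:=False]"
      define u2 where "u2 = u[l:=False]"
      define u12 where "u12 = u1[l:=False]"
      have in1: "u1 \<in> cube_verts d" "u2 \<in> cube_verts d" "u12 \<in> cube_verts d"
        using lu by (auto simp: u1_def u2_def u12_def cube_verts_def)
      have T1: "T u1 = T u - {j}" using lu jd by (auto simp: T_def u1_def nth_list_update split: if_splits)
      have T2: "T u2 = T u - {l}" using lu jd by (auto simp: T_def u2_def nth_list_update split: if_splits)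
      have T12: "T u12 = T u - {j,l}" using lu jd by (auto simp: T_def u12_def u1_def nth_list_update split: if_splits)
      have "card (T u1) < card (T u)" using T1 jl 3 finT[of u] by (simp add: card_Diff_singleton)
      then have "h u1 = sd (h z) (c ` T u1)" using in1 by (intro less.hyps) auto
      then have h1: "h u1 = sd (h z) (c ` (T u - {j}))" using T1 by simp
      have "card (T u2) < card (T u)" using T2 jl 3 finT[of u] by (simp add: card_Diff_singleton)
      then have "h u2 = sd (h z) (c ` T u2)" using in1 by (intro less.hyps) auto
      then have h2: "h u2 = sd (h z) (c ` (T u - {l}))" using T2 by simp
      have "card (T u12) < card (T u)" using T12 jl finT by (intro psubset_card_mono) auto
      then have "h u12 = sd (h z) (c ` T u12)" using in1 by (intro less.hyps) auto
      then have h12: "h u12 = sd (h z) (c ` (T u - {j,l}))" using T12 by simp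
      define H where "H = h u12"
      have TuS: "T u \<subseteq> {..<d}" by (auto simp: T_def)
      have cl: "c l \<noteq> c j" using inj_onD[OF cinj, of l j] jd jl by auto
      have sub: "T u - {j,l} \<subseteq> {..<d}" using TuS by auto
      have cnot: "c j \<notin> c ` (T u - {j,l})" "c l \<notin> c ` (T u - {j,l})"
        using inj_on_image_mem_iff[OF cinj _ sub] jd by auto
      have e1: "T u - {j} = insert l (T u - {j,l})" using jl by auto
      have e2: "T u - {l} = insert j (T u - {j,l})" using jl by auto
      have e3: "T u = insert l (insert j (T u - {j,l}))" using jl by auto
      have im1: "c ` (T u - {j}) = sd (c ` (T u - {j,l})) {c l}"
        unfolding e1 using cnot by (simp add: sd_single)
      have im2: "c ` (T u - {l}) = sd (c ` (T u - {j,l})) {c j}"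
        unfolding e2 using cnot by (simp add: sd_single)
      have imu: "c ` T u = sd (c ` (T u - {j,l})) {c l, c j}"
        using cnot by (subst e3) (auto simp: sd_def)
      have hu1: "h u1 = sd H {c l}" using h1 h12 im1 by (simp add: H_def sd_assoc)
      have hu2: "h u2 = sd H {c j}" using h2 h12 im2 by (simp add: H_def sd_assoc)
      have "u1[j:=True] = u" using jd list_update_id[of u j] by (simp add: u1_def)
      then have "cube_adj u1 u" using cube_adj_upd[of j u1 True] jd lu by (simp add: u1_def)
      then obtain a where a: "h u = sd (h u1) {a}" using adj in1 less.prems by blast
      have "u2[l:=True] = u" using jd list_update_id[of u l] by (simp add: u2_def)
      then have "cube_adj u2 u" using cube_adj_upd[of l u2 True] jd lu by (simp add: u2_def)
      then obtain b where b: "h u = sd (h u2) {b}" using adj in1 less.prems by blast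
      have "sd H (sd {c l} {a}) = sd H (sd {c j} {b})" using a b hu1 hu2 by (simp add: sd_assoc)
      then have eq: "sd {c l} {a} = sd {c j} {b}" by (rule sd_cancel)
      have "a \<noteq> c l"
      proof
        assume "a = c l"
        then have "h u = H" using a hu1 by (simp add: sd_assoc)
        then have "u = u12" using inj in1 less.prems by (auto simp: H_def inj_on_def)
        then have "u!j = u12!j" by simp
        then show False using jd lu jl by (simp add: u12_def u1_def nth_list_update split: if_splits)
      qed
      then have "c l \<in> sd {c l} {a}" by (simp add: sd_def)
      then have "c l \<in> sd {c j} {b}" using eq by simp
      then have "b = c l" using cl by (auto simp: sd_def)
      then have "c j \<in> sd {c j} {b}" using cl by (auto simp: sd_def)
      then have "c j \<in> sd {c l} {a}" using eq by simp
      then have "a = c j" using cl by (auto simp: sd_def)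
      moreover have "sd {c l} {c j} = {c l, c j}" using cl by (auto simp: sd_def)
      ultimately have "h u = sd H {c l, c j}" using a hu1 by (simp add: sd_assoc)
      then show ?thesis using imu h12 by (simp add: H_def sd_assoc)
    qed
  qed
  show ?thesis using cinj main by (auto simp: T_def z_def)
qed


definition PS :: "nat \<Rightarrow> nat \<Rightarrow> nat list set" where
  "PS k n = {w. length w = n \<and> ispell k w}"

lemma PS_0: "PS k 0 = {[]}" by (auto simp: PS_def)

lemma PS_Suc: "v \<in> PS k (Suc n) \<longleftrightarrow> (\<exists>y v1. v = y#v1 \<and> y < k \<and> v1 \<in> PS k n) \<or>
   (\<exists>v2 m. n = Suc m \<and> v = k#k#v2 \<and> v2 \<in> PS k m)"
  by (cases v) (auto simp: PS_def ispell_Cons)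

lemma ins_k: "(k::nat) \<ge> 1 \<Longrightarrow> insert k {1..k-1} = {1..k}" by auto

lemma classify:
  assumes k: "k \<ge> 1" and v: "v \<in> PS k (Suc n)"
  obtains (lt) y v1 where "v = y#v1" "y < k" "v1 \<in> PS k n" "hd0 (g k v) = {1..y}" "tl1 (g k v) = g k v1"
  | (kk) m v2 where "n = Suc m" "v = k#k#v2" "v2 \<in> PS k m" "hd0 (g k v) = {1..k}" "tl1 (g k v) = g k ((k-1)#v2)"
  using v k ins_k[OF k] unfolding PS_Suc by auto

lemma L1: "(j::nat) \<notin> {1..x} \<Longrightarrow> insert j {1..x} = {1..y} \<Longrightarrow> j = Suc x \<and> y = Suc x"
proof -
  assume nj: "j \<notin> {1..x}" and eq: "insert j {1..x} = {1..y}"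
  have a: "i \<in> insert j {1..x} \<longleftrightarrow> i \<in> {1..y}" for i using eq by simp
  from a[of j] have "1 \<le> j" "j \<le> y" by auto
  moreover from nj \<open>1 \<le> j\<close> have "x < j" by auto
  moreover from a[of y] \<open>1 \<le> j\<close> \<open>j \<le> y\<close> have "y = j \<or> y \<le> x" by auto
  ultimately have "y = j" by linarith
  moreover from a[of "Suc x"] have "Suc x \<le> y \<Longrightarrow> Suc x = j" by auto
  ultimately show ?thesis using \<open>x < j\<close> by linarith
qed

lemma L2: "{1..y} - {Suc x} = {1..(x::nat)} \<Longrightarrow> y = x \<or> y = Suc x"
proof -
  assume eq: "{1..y} - {Suc x} = {1..(x::nat)}"
  have a: "i \<in> {1..y} - {Suc x} \<longleftrightarrow> i \<in> {1..x}" for i using eq by simp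
  from a[of "Suc (Suc x)"] have "y < Suc (Suc x)" by auto
  moreover from a[of x] have "x \<ge> 1 \<Longrightarrow> x \<le> y" by auto
  ultimately show ?thesis by linarith
qed

lemma L3: "(j::nat) \<notin> {1..k} \<Longrightarrow> insert j {1..k} = {1..y} \<Longrightarrow> y \<le> k \<Longrightarrow> False"
  using L1[of j k y] by simp

lemma hd0_le: assumes "k \<ge> 1" "v \<in> PS k (Suc n)" shows "\<exists>y\<le>k. hd0 (g k v) = {1..y}"
  by (rule classify[OF assms]) (blast intro: less_imp_le order.refl)+

lemma in_gPS: "k \<ge> 1 \<Longrightarrow> X \<in> g k ` PS k (Suc n) \<Longrightarrow> \<exists>y\<le>k. hd0 X = {1..y}"
proof -
  assume k: "k \<ge> 1" and "X \<in> g k ` PS k (Suc n)"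
  then obtain v where "X = g k v" "v \<in> PS k (Suc n)" by blast
  then show ?thesis using hd0_le[OF k] by simp
qed

lemma eq_split: "X - C = B \<longleftrightarrow> hd0 X - hd0 C = hd0 B \<and> tl1 X - tl1 C = tl1 B"
  by (subst set_eq_hd0_tl1) simp


datatype cl = Fx nat | Ed nat | FK | EK

fun validc :: "nat \<Rightarrow> cl \<Rightarrow> bool" where
  "validc k (Fx x) = (x < k)"
| "validc k (Ed i) = (Suc i < k)"
| "validc k FK = True"
| "validc k EK = True"

fun wt :: "cl \<Rightarrow> nat" where
  "wt (Fx x) = 1" | "wt (Ed i) = 1" | "wt FK = 2" | "wt EK = 2"

fun dm :: "cl \<Rightarrow> nat" where
  "dm (Fx x) = 0" | "dm (Ed i) = 1" | "dm FK = 0" | "dm EK = 1"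

definition CW :: "nat \<Rightarrow> nat \<Rightarrow> nat \<Rightarrow> cl list set" where
  "CW k n d = {cw. (\<forall>c\<in>set cw. validc k c) \<and> sum_list (map wt cw) = n \<and> sum_list (map dm cw) = d}"

fun Im :: "nat \<Rightarrow> cl list \<Rightarrow> nat list set" where
  "Im k [] = {[]}"
| "Im k (Fx x # cw) = Cons x ` Im k cw"
| "Im k (Ed i # cw) = Cons i ` Im k cw \<union> Cons (Suc i) ` Im k cw"
| "Im k (FK # cw) = (\<lambda>w. k#k#w) ` Im k cw"
| "Im k (EK # cw) = (\<lambda>w. (k-1)#(k-1)#w) ` Im k cw \<union> (\<lambda>w. k#k#w) ` Im k cw"

lemma CW_Cons: "c#cw \<in> CW k n d \<longleftrightarrow> validc k c \<and> wt c \<le> n \<and> dm c \<le> d \<and> cw \<in> CW k (n - wt c) (d - dm c)"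
  by (auto simp: CW_def)

lemma classify2[consumes 2, case_names lt kk]:
  "k \<ge> 1 \<Longrightarrow> v \<in> PS k (Suc n) \<Longrightarrow>
  (\<And>y v1. v = y#v1 \<Longrightarrow> y < k \<Longrightarrow> v1 \<in> PS k n \<Longrightarrow> hd0 (g k v) = {1..y} \<Longrightarrow> tl1 (g k v) = g k v1 \<Longrightarrow> P) \<Longrightarrow>
  (\<And>m v2. n = Suc m \<Longrightarrow> v = k#k#v2 \<Longrightarrow> v2 \<in> PS k m \<Longrightarrow> hd0 (g k v) = {1..k} \<Longrightarrow> tl1 (g k v) = g k ((k-1)#v2) \<Longrightarrow> P) \<Longrightarrow> P"
  by (rule classify)

lemma eq_splitI: "hd0 X - hd0 C = hd0 B \<Longrightarrow> tl1 X - tl1 C = tl1 B \<Longrightarrow> X - C = B"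
  using eq_split[of X C B] by (rule iffD2) (rule conjI)
lemma eq_splitD: "X - C = B \<Longrightarrow> hd0 X - hd0 C = hd0 B \<and> tl1 X - tl1 C = tl1 B"
  using eq_split[of X C B] by (rule iffD1)

lemma Icc_lems: "{1..Suc x} - {Suc x} = {1..(x::nat)}" "{1..x} - {Suc x} = {1..(x::nat)}"
  "(y::nat) < k \<Longrightarrow> {1..y} - {k} = {1..y}" "(k::nat) \<ge> 1 \<Longrightarrow> {1..k} - {k} = {1..k-1}"
  by auto

lemma card_sh: "card (sh Y) = card Y"
  unfolding sh_def by (rule card_image) (auto simp: inj_on_def)

lemma main:
  assumes k: "k \<ge> 2"
  shows "(\<forall>X. X - C = B \<longrightarrow> X \<in> g k ` PS k n) \<Longrightarrow> B \<inter> C = {} \<Longrightarrow>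
    \<exists>cw\<in>CW k n (card C). {v \<in> PS k n. g k v - C = B} = Im k cw"
proof (induction n arbitrary: B C rule: less_induct)
  case (less n)
  have k1: "k \<ge> 1" "k - 1 < k" using k by auto
  have k2: "k - Suc 0 < k" "Suc 0 \<le> k" using k by auto
  note [simp] = k1 k2
  have hyp: "\<And>X. X - C = B \<Longrightarrow> X \<in> g k ` PS k n" using less.prems(1) by blast
  have disj: "B \<inter> C = {}" by fact
  have "B - C = B" using disj by blast
  then have "B \<in> g k ` PS k n" by (rule hyp)
  then obtain w where w: "w \<in> PS k n" "B = g k w" by (elim imageE) simp
  have BC: "(B \<union> C) - C = B" using disj by blast
  then have "B \<union> C \<in> g k ` PS k n" by (rule hyp)
  then obtain v0 where "B \<union> C = g k v0" by (elim imageE) simp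
  then have finC: "finite C" using finite_g[of k v0] by (metis finite_Un)
  have disj0: "hd0 B \<inter> hd0 C = {}" "tl1 B \<inter> tl1 C = {}" using disj by (metis hd0_Int hd0_empty, metis tl1_Int tl1_empty)
  show ?case
  proof (cases n)
    case 0
    have "B \<union> C \<in> g k ` PS k 0" using \<open>B \<union> C \<in> g k ` PS k n\<close> 0 by simp
    then have "B \<union> C = {}" by (simp add: PS_0)
    then have BC: "B = {}" "C = {}" by auto
    have "{v \<in> PS k n. g k v - C = B} = Im k []" using BC 0 by (auto simp: PS_0)
    moreover have "[] \<in> CW k n (card C)" using BC 0 by (simp add: CW_def)
    ultimately show ?thesis by blast
  next
    case (Suc n1)
    have wS: "w \<in> PS k (Suc n1)" using w Suc by simp
    have hypS: "\<exists>y\<le>k. hd0 X = {1..y}" if "X - C = B" for X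
    proof -
      have "X \<in> g k ` PS k (Suc n1)" using hyp[OF that] Suc by simp
      then show ?thesis by (rule in_gPS[OF k1(1)])
    qed
    from k1(1) wS show ?thesis
    proof (cases rule: classify2)
      case (lt x w1)
      have hB: "hd0 B = {1..x}" "tl1 B = g k w1" using lt w by auto
      define C' where "C' = tl1 C"
      define B' where "B' = tl1 B"
      have disj': "B' \<inter> C' = {}" using disj0 by (simp add: B'_def C'_def)
      have C0sub: "hd0 C \<subseteq> {Suc x}"
      proof
        fix j assume j: "j \<in> hd0 C"
        then have "(0,j) \<in> C" by (simp add: hd0_def)
        then have "insert (0,j) B - C = B" using disj by blast
        then obtain y where "y \<le> k" "hd0 (insert (0,j) B) = {1..y}" using hypS by blast
        then have "insert j {1..x} = {1..y}" using hB by simp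
        moreover have "j \<notin> {1..x}" using j disj0 hB by blast
        ultimately show "j \<in> {Suc x}" using L1 by blast
      qed
      have hypT: "\<forall>Y. Y - C' = B' \<longrightarrow> Y \<in> g k ` PS k n1" if "Suc x \<le> k" "Suc x \<notin> hd0 C \<or> Suc x < k"
      proof (intro allI impI)
        fix Y assume Y: "Y - C' = B'"
        define X where "X = A x \<union> sh Y"
        have "X - C = B" apply (rule eq_splitI) using Y C0sub hB that by (auto simp: X_def B'_def C'_def)
        then have "X \<in> g k ` PS k (Suc n1)" using hyp Suc by simp
        then obtain v where v: "v \<in> PS k (Suc n1)" "X = g k v" by (elim imageE) simp
        from k1(1) v(1) show "Y \<in> g k ` PS k n1"
        proof (cases rule: classify2)
          case (lt y v1)
          have "Y = tl1 X" by (simp add: X_def)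
          also have "\<dots> = g k v1" using v(2) lt(5) by simp
          finally show ?thesis using lt(3) by blast
        next
          case (kk m v2)
          have "{1..x} = hd0 X" by (simp add: X_def)
          also have "\<dots> = {1..k}" using v(2) kk by simp
          finally have "x = k" by (metis atLeast1_eq)
          then show ?thesis using lt by simp
        qed
      qed
      have disjT: "B' \<inter> C' = {}" by (rule disj')
      have "sh C' \<subseteq> C" using decomp[of C] unfolding C'_def by blast
      then have finC': "finite C'" using finC finite_subset finite_sh by blast
      have "hd0 C = {} \<or> hd0 C = {Suc x}" using C0sub by (simp add: subset_singleton_iff)
      moreover have "Suc x < k \<or> Suc x = k" using lt(2) by linarith
      ultimately consider (a) "hd0 C = {}" | (b) "hd0 C = {Suc x}" "Suc x < k" | (c) "hd0 C = {Suc x}" "Suc x = k"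
        by blast
      then show ?thesis
      proof cases
        case a
        have hT: "\<forall>Y. Y - C' = B' \<longrightarrow> Y \<in> g k ` PS k n1" by (rule hypT) (use lt a in auto)
        have "n1 < n" using Suc by simp
        have "\<exists>cw\<in>CW k n1 (card C'). {v \<in> PS k n1. g k v - C' = B'} = Im k cw"
          by (rule less.IH[OF \<open>n1 < n\<close> hT disjT])
        then obtain cw1 where cw1: "cw1 \<in> CW k n1 (card C')" "{v \<in> PS k n1. g k v - C' = B'} = Im k cw1"
          by blast
        have "C = Pair 0 ` hd0 C \<union> sh (tl1 C)" by (rule decomp)
        also have "\<dots> = sh C'" using a by (simp add: C'_def)
        finally have Ceq: "C = sh C'" .
        have "Fx x # cw1 \<in> CW k n (card C)" using cw1(1) lt Suc Ceq by (simp add: CW_def card_sh)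
        moreover have "{v \<in> PS k n. g k v - C = B} = Im k (Fx x # cw1)"
        proof (rule set_eqI, rule iffI)
          fix v assume "v \<in> {v \<in> PS k n. g k v - C = B}"
          then have v: "v \<in> PS k (Suc n1)" "g k v - C = B" using Suc by auto
          from k1(1) v(1) show "v \<in> Im k (Fx x # cw1)"
          proof (cases rule: classify2)
            case (lt y v1)
            have "{1..y} = {1..x}" using eq_splitD[OF v(2)] lt(4) hB(1) a by (metis Diff_empty)
            then have "y = x" by (metis atLeast1_eq)
            moreover have "g k v1 - C' = B'" using eq_splitD[OF v(2)] lt by (simp add: C'_def B'_def)
            ultimately show ?thesis using lt cw1(2) by auto
          next
            case (kk m v2)
            have "{1..k} = {1..x}" using eq_splitD[OF v(2)] kk(4) hB(1) a by (metis Diff_empty)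
            then have "k = x" by (metis atLeast1_eq)
            then show ?thesis using \<open>x < k\<close> by simp
          qed
        next
          fix v assume "v \<in> Im k (Fx x # cw1)"
          then obtain v1 where v1: "v = x # v1" "v1 \<in> PS k n1" "g k v1 - C' = B'" using cw1(2) by auto
          have "v \<in> PS k n" using v1 lt Suc by (simp add: PS_Suc)
          moreover have "g k v - C = B" apply (rule eq_splitI) using v1 lt hB a by (simp_all add: C'_def B'_def)
          ultimately show "v \<in> {v \<in> PS k n. g k v - C = B}" by simp
        qed
        ultimately show ?thesis by blast
      next
        case b
        have hT: "\<forall>Y. Y - C' = B' \<longrightarrow> Y \<in> g k ` PS k n1" by (rule hypT) (use lt b in auto)
        have "n1 < n" using Suc by simp
        have "\<exists>cw\<in>CW k n1 (card C'). {v \<in> PS k n1. g k v - C' = B'} = Im k cw"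
          by (rule less.IH[OF \<open>n1 < n\<close> hT disjT])
        then obtain cw1 where cw1: "cw1 \<in> CW k n1 (card C')" "{v \<in> PS k n1. g k v - C' = B'} = Im k cw1"
          by blast
        have "C = Pair 0 ` hd0 C \<union> sh (tl1 C)" by (rule decomp)
        also have "\<dots> = insert (0, Suc x) (sh C')" using b by (simp add: C'_def)
        finally have Ceq: "C = insert (0, Suc x) (sh C')" .
        have "(0, Suc x) \<notin> sh C'" by simp
        then have cardC: "card C = Suc (card C')" using Ceq finC' by (simp add: card_sh)
        have "Ed x # cw1 \<in> CW k n (card C)" using cw1(1) b Suc cardC by (simp add: CW_def)
        moreover have "{v \<in> PS k n. g k v - C = B} = Im k (Ed x # cw1)"
        proof (rule set_eqI, rule iffI)
          fix v assume "v \<in> {v \<in> PS k n. g k v - C = B}"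
          then have v: "v \<in> PS k (Suc n1)" "g k v - C = B" using Suc by auto
          have e: "hd0 (g k v) - hd0 C = hd0 B" "tl1 (g k v) - tl1 C = tl1 B"
            using eq_splitD[OF v(2)] by auto
          from k1(1) v(1) show "v \<in> Im k (Ed x # cw1)"
          proof (cases rule: classify2)
            case (lt y v1)
            have "{1..y} - {Suc x} = {1..x}" using e(1) unfolding lt(4) b(1) hB(1) .
            then have "y = x \<or> y = Suc x" by (rule L2)
            moreover have "g k v1 - C' = B'" using e(2) unfolding lt(5) C'_def B'_def .
            then have "v1 \<in> Im k cw1" using lt(3) by (subst cw1(2)[symmetric]) simp
            ultimately show ?thesis using lt(1) by auto
          next
            case (kk m v2)
            have "{1..k} - {Suc x} = {1..x}" using e(1) unfolding kk(4) b(1) hB(1) .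
            then have "k = x \<or> k = Suc x" by (rule L2)
            then show ?thesis using b(2) lt(2) by auto
          qed
        next
          fix v assume "v \<in> Im k (Ed x # cw1)"
          then obtain y v1 where v1: "v = y # v1" "y = x \<or> y = Suc x" "v1 \<in> Im k cw1"
            by auto
          then have "v1 \<in> {v \<in> PS k n1. g k v - C' = B'}" by (subst cw1(2))
          then have v1': "v1 \<in> PS k n1" "g k v1 - C' = B'" by simp_all
          have yk: "y < k" using v1(2) b(2) lt(2) by auto
          have "v \<in> PS k n" using v1(1) v1'(1) yk Suc by (simp add: PS_Suc)
          moreover have "g k v - C = B"
          proof (rule eq_splitI)
            show "hd0 (g k v) - hd0 C = hd0 B" using v1(1,2) yk hB(1) b(1) by (auto simp: Icc_lems)
            show "tl1 (g k v) - tl1 C = tl1 B" using v1(1) v1'(2) yk by (simp add: C'_def B'_def)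
          qed
          ultimately show "v \<in> {v \<in> PS k n. g k v - C = B}" by simp
        qed
        ultimately show ?thesis by blast
      next
        case c
        have xk: "x = k - 1" using c(2) by simp
        have "(0,k) \<in> C" using c(1,2) by (auto simp: hd0_def)
        then have "insert (0,k) B - C = B" using disj by blast
        then have "insert (0,k) B \<in> g k ` PS k (Suc n1)" using hyp Suc by simp
        then obtain v where v: "v \<in> PS k (Suc n1)" "insert (0,k) B = g k v" by (elim imageE) simp
        obtain m v2 where mv2: "n1 = Suc m" "w1 = (k-1)#v2" "v2 \<in> PS k m"
        proof -
          from k1(1) v(1) show ?thesis
          proof (cases rule: classify2)
            case (lt y v1)
            have "insert k {1..x} = {1..y}" using v(2) lt(4) hB(1) by (metis hd0_insert0)
            then have "k \<le> y" by auto
            then show ?thesis using lt(2) by simp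
          next
            case (kk m v2)
            have "g k w1 = g k ((k-1)#v2)" using v(2) kk(5) hB(2) by (metis tl1_insert0)
            moreover have "w1 \<in> PS k (Suc m)" using lt(3) kk(1) by simp
            moreover have "(k-1)#v2 \<in> PS k (Suc m)" using kk(3) k by (simp add: PS_Suc)
            ultimately have "w1 = (k-1)#v2" using g_inj[OF k1(1)] by (simp add: PS_def)
            then show ?thesis using that kk(1,3) by blast
          qed
        qed
        define C'' where "C'' = tl1 C'"
        define B'' where "B'' = tl1 B'"
        have hB': "hd0 B' = {1..k-1}" "tl1 B' = g k v2" using hB(2) mv2(2) by (simp_all add: B'_def)
        have disjT2: "B'' \<inter> C'' = {}" using disjT by (simp add: B''_def C''_def flip: tl1_Int)
        have C1: "hd0 C' = {}"
        proof (rule ccontr)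
          assume "hd0 C' \<noteq> {}"
          then obtain j where j: "j \<in> hd0 C'" by blast
          then have "(1,j) \<in> C" by (simp add: hd0_def C'_def tl1_def)
          define X where "X = insert (0,k) (insert (1,j) B)"
          have "X - C = B" using \<open>(1,j) \<in> C\<close> \<open>(0,k) \<in> C\<close> disj by (auto simp: X_def)
          then have "X \<in> g k ` PS k (Suc n1)" using hyp Suc by simp
          then obtain v' where v': "v' \<in> PS k (Suc n1)" "X = g k v'" by (elim imageE) simp
          have hX: "hd0 X = insert k {1..x}" "hd0 (tl1 X) = insert j {1..k-1}"
            using hB(1) hB' by (simp_all add: X_def B'_def)
          have jn: "j \<notin> {1..k-1}" using j disjT hB'(1) by (auto simp: hd0_def)
          from k1(1) v'(1) show False
          proof (cases rule: classify2)
            case (lt y v1)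
            have "insert k {1..x} = {1..y}" using hX(1) v'(2) lt(4) by simp
            then have "k \<le> y" by auto
            then show False using lt(2) by simp
          next
            case (kk m' v2')
            have "hd0 (tl1 X) = {1..k-1}" using v'(2) kk(5) by simp
            then show False using hX(2) jn by blast
          qed
        qed
        have "C = Pair 0 ` hd0 C \<union> sh (tl1 C)" by (rule decomp)
        also have "tl1 C = sh C''"
          using decomp[of C'] C1 by (simp add: C'_def C''_def)
        finally have Ceq: "C = insert (0,k) (sh (sh C''))" using c by simp
        have "sh C'' \<subseteq> C'" using decomp[of C'] unfolding C''_def by blast
        then have finC'': "finite C''" using finC' finite_subset finite_sh by blast
        have "(0, k) \<notin> sh (sh C'')" by simp
        then have cardC: "card C = Suc (card C'')" using Ceq finC'' by (simp add: card_sh)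
        have hT2: "\<forall>Y. Y - C'' = B'' \<longrightarrow> Y \<in> g k ` PS k m"
        proof (intro allI impI)
          fix Y assume Y: "Y - C'' = B''"
          define X where "X = A (k-1) \<union> sh (A (k-1) \<union> sh Y)"
          have "X - C = B"
          proof (rule eq_splitI)
            show "hd0 X - hd0 C = hd0 B" using c(1) hB(1) xk by (simp add: X_def Icc_lems)
            show "tl1 X - tl1 C = tl1 B"
            proof (rule eq_splitI)
              show "hd0 (tl1 X) - hd0 (tl1 C) = hd0 (tl1 B)"
                using C1 hB'(1) by (simp add: X_def C'_def B'_def)
              show "tl1 (tl1 X) - tl1 (tl1 C) = tl1 (tl1 B)"
                using Y by (simp add: X_def C''_def C'_def B''_def B'_def)
            qed
          qed
          then have "X \<in> g k ` PS k (Suc n1)" using hyp Suc by simp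
          then obtain v where v: "v \<in> PS k (Suc n1)" "X = g k v" by (elim imageE) simp
          from k1(1) v(1) show "Y \<in> g k ` PS k m"
          proof (cases rule: classify2)
            case (lt y v1)
            have tX: "tl1 X = g k v1" using v(2) lt(5) by simp
            have v1P: "v1 \<in> PS k (Suc m)" using lt(3) mv2(1) by simp
            from k1(1) v1P show ?thesis
            proof (cases rule: classify2)
              case (lt y' v'')
              have "Y = tl1 (tl1 X)" by (simp add: X_def)
              also have "\<dots> = g k v''" using tX lt(5) by simp
              finally show ?thesis using lt(3) by blast
            next
              case (kk m' v2')
              have "{1..k-1} = hd0 (tl1 X)" by (simp add: X_def)
              also have "\<dots> = {1..k}" using tX kk(4) by simp
              finally have "k - 1 = k" by (metis atLeast1_eq)
              then show ?thesis using k1 by simp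
            qed
          next
            case (kk m' v2')
            have "{1..k-1} = hd0 X" by (simp add: X_def)
            also have "\<dots> = {1..k}" using v(2) kk(4) by simp
            finally have "k - 1 = k" by (metis atLeast1_eq)
            then show ?thesis using k1 by simp
          qed
        qed
        have "m < n" using Suc mv2(1) by simp
        have "\<exists>cw\<in>CW k m (card C''). {v \<in> PS k m. g k v - C'' = B''} = Im k cw"
          by (rule less.IH[OF \<open>m < n\<close> hT2 disjT2])
        then obtain cw2 where cw2: "cw2 \<in> CW k m (card C'')" "{v \<in> PS k m. g k v - C'' = B''} = Im k cw2"
          by blast
        have "EK # cw2 \<in> CW k n (card C)" using cw2(1) Suc mv2(1) cardC by (simp add: CW_def)
        moreover have "{v \<in> PS k n. g k v - C = B} = Im k (EK # cw2)"
        proof (rule set_eqI, rule iffI)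
          fix v assume "v \<in> {v \<in> PS k n. g k v - C = B}"
          then have v: "v \<in> PS k (Suc n1)" "g k v - C = B" using Suc by auto
          have e: "hd0 (g k v) - hd0 C = hd0 B" "tl1 (g k v) - tl1 C = tl1 B"
            using eq_splitD[OF v(2)] by auto
          from k1(1) v(1) show "v \<in> Im k (EK # cw2)"
          proof (cases rule: classify2)
            case (lt y v1)
            have "{1..y} - {Suc x} = {1..x}" using e(1) unfolding lt(4) c(1) hB(1) .
            moreover have "y < Suc x" using lt(2) c(2) by simp
            ultimately have "{1..y} = {1..x}" by (simp add: Icc_lems)
            then have "y = x" by (metis atLeast1_eq)
            then have y: "y = k - 1" using xk by simp
            have e2: "g k v1 - C' = B'" using e(2) unfolding lt(5) C'_def B'_def .
            have v1P: "v1 \<in> PS k (Suc m)" using lt(3) mv2(1) by simp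
            have e3: "hd0 (g k v1) - hd0 C' = hd0 B'" "tl1 (g k v1) - tl1 C' = tl1 B'"
              using eq_splitD[OF e2] by auto
            from k1(1) v1P show ?thesis
            proof (cases rule: classify2)
              case (lt y' v'')
              have "{1..y'} = {1..k-1}" using e3(1) unfolding lt(4) C1 hB'(1) by simp
              then have y': "y' = k - 1" by (metis atLeast1_eq)
              have "g k v'' - C'' = B''" using e3(2) unfolding lt(5) C''_def B''_def .
              then have "v'' \<in> Im k cw2" using lt(3) by (subst cw2(2)[symmetric]) simp
              then show ?thesis using y y' \<open>v = y # v1\<close> lt(1) by simp
            next
              case (kk m' v2')
              have "{1..k} = {1..k-1}" using e3(1) unfolding kk(4) C1 hB'(1) by simp
              then have "k = k - 1" by (metis atLeast1_eq)
              then show ?thesis using k1 by simp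
            qed
          next
            case (kk m' v2')
            have e2: "g k ((k-1)#v2') - C' = B'" using e(2) unfolding kk(5) C'_def B'_def .
            have "g k v2' - C'' = B''" using eq_splitD[OF e2] k1 by (simp add: C''_def B''_def)
            then have "v2' \<in> Im k cw2" using kk(3) kk(1) mv2(1) by (subst cw2(2)[symmetric]) simp
            then show ?thesis using kk(2) by simp
          qed
        next
          fix v assume "v \<in> Im k (EK # cw2)"
          then obtain v'' where v'': "v = (k-1)#(k-1)#v'' \<or> v = k#k#v''" "v'' \<in> Im k cw2"
            by auto
          then have "v'' \<in> {v \<in> PS k m. g k v - C'' = B''}" by (subst cw2(2))
          then have v2: "v'' \<in> PS k m" "g k v'' - C'' = B''" by simp_all
          have tlC: "g k ((k-1)#v'') - C' = B'"
          proof (rule eq_splitI)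
            show "hd0 (g k ((k - 1) # v'')) - hd0 C' = hd0 B'" using C1 hB'(1) by simp
            show "tl1 (g k ((k - 1) # v'')) - tl1 C' = tl1 B'" using v2(2) by (simp add: C''_def B''_def)
          qed
          have "v \<in> PS k n" using v''(1) v2(1) Suc mv2(1) by (auto simp: PS_Suc)
          moreover have "g k v - C = B"
            using v''(1)
          proof
            assume vv: "v = (k-1)#(k-1)#v''"
            show "g k v - C = B"
            proof (rule eq_splitI)
              show "hd0 (g k v) - hd0 C = hd0 B" using vv c(1) hB(1) xk by (simp add: Icc_lems)
              show "tl1 (g k v) - tl1 C = tl1 B" using vv tlC by (simp add: C'_def B'_def)
            qed
          next
            assume vv: "v = k#k#v''"
            show "g k v - C = B"
            proof (rule eq_splitI)
              show "hd0 (g k v) - hd0 C = hd0 B" using vv c hB(1) xk by (simp add: Icc_lems)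
              show "tl1 (g k v) - tl1 C = tl1 B" using vv tlC by (simp add: C'_def B'_def)
            qed
          qed
          ultimately show "v \<in> {v \<in> PS k n. g k v - C = B}" by simp
        qed
        ultimately show ?thesis by blast
      qed
    next
      case (kk m w2)
      have hB: "hd0 B = {1..k}" "tl1 B = g k ((k-1)#w2)" using kk(4,5) w(2) by simp_all
      define C' where "C' = tl1 C"
      define B' where "B' = tl1 B"
      define C'' where "C'' = tl1 C'"
      define B'' where "B'' = tl1 B'"
      have hB': "hd0 B' = {1..k-1}" "tl1 B' = g k w2" using hB(2) by (simp_all add: B'_def)
      have disjT: "B' \<inter> C' = {}" using disj0 by (simp add: B'_def C'_def)
      have disjT2: "B'' \<inter> C'' = {}" using disjT by (simp add: B''_def C''_def flip: tl1_Int)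
      have C0: "hd0 C = {}"
      proof (rule ccontr)
        assume "hd0 C \<noteq> {}"
        then obtain j where j: "j \<in> hd0 C" by blast
        then have "(0,j) \<in> C" by (simp add: hd0_def)
        then have "insert (0,j) B - C = B" using disj by blast
        then obtain y where y: "y \<le> k" "hd0 (insert (0,j) B) = {1..y}" using hypS by blast
        then have "insert j {1..k} = {1..y}" using hB(1) by simp
        moreover have "j \<notin> {1..k}" using j disj0 hB(1) by blast
        ultimately show False using L3 y(1) by blast
      qed
      have C1: "hd0 C' = {}"
      proof (rule ccontr)
        assume "hd0 C' \<noteq> {}"
        then obtain j where j: "j \<in> hd0 C'" by blast
        then have "(1,j) \<in> C" by (simp add: hd0_def C'_def tl1_def)
        define X where "X = insert (1,j) B"
        have "X - C = B" using \<open>(1,j) \<in> C\<close> disj by (auto simp: X_def)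
        then have "X \<in> g k ` PS k (Suc n1)" using hyp Suc by simp
        then obtain v' where v': "v' \<in> PS k (Suc n1)" "X = g k v'" by (elim imageE) simp
        have hX: "hd0 X = {1..k}" "hd0 (tl1 X) = insert j {1..k-1}"
          using hB(1) hB' by (simp_all add: X_def B'_def)
        have jn: "j \<notin> {1..k-1}" using j disjT hB'(1) by (auto simp: hd0_def)
        from k1(1) v'(1) show False
        proof (cases rule: classify2)
          case (lt y v1)
          have "{1..k} = {1..y}" using hX(1) v'(2) lt(4) by simp
          then have "k = y" by (metis atLeast1_eq)
          then show False using lt(2) by simp
        next
          case (kk m' v2')
          have "hd0 (tl1 X) = {1..k-1}" using v'(2) kk(5) by simp
          then show False using hX(2) jn by blast
        qed
      qed
      have "C = Pair 0 ` hd0 C \<union> sh (tl1 C)" by (rule decomp)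
      also have "tl1 C = sh C''"
        using decomp[of C'] C1 by (simp add: C'_def C''_def)
      finally have Ceq: "C = sh (sh C'')" using C0 by simp
      have cardC: "card C = card C''" using Ceq by (simp add: card_sh)
      have hT2: "\<forall>Y. Y - C'' = B'' \<longrightarrow> Y \<in> g k ` PS k m"
      proof (intro allI impI)
        fix Y assume Y: "Y - C'' = B''"
        define X where "X = insert (0,k) (A (k-1)) \<union> sh (A (k-1) \<union> sh Y)"
        have "X - C = B"
        proof (rule eq_splitI)
          show "hd0 X - hd0 C = hd0 B" using C0 hB(1) ins_k[OF k1(1)] by (simp add: X_def)
          show "tl1 X - tl1 C = tl1 B"
          proof (rule eq_splitI)
            show "hd0 (tl1 X) - hd0 (tl1 C) = hd0 (tl1 B)"
              using C1 hB'(1) by (simp add: X_def C'_def B'_def)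
            show "tl1 (tl1 X) - tl1 (tl1 C) = tl1 (tl1 B)"
              using Y by (simp add: X_def C''_def C'_def B''_def B'_def)
          qed
        qed
        then have "X \<in> g k ` PS k (Suc n1)" using hyp Suc by simp
        then obtain v where v: "v \<in> PS k (Suc n1)" "X = g k v" by (elim imageE) simp
        from k1(1) v(1) show "Y \<in> g k ` PS k m"
        proof (cases rule: classify2)
          case (lt y v1)
          have "{1..k} = hd0 X" using ins_k[OF k1(1)] by (simp add: X_def)
          also have "\<dots> = {1..y}" using v(2) lt(4) by simp
          finally have "k = y" by (metis atLeast1_eq)
          then show ?thesis using lt(2) by simp
        next
          case (kk m' v2')
          have "Y = tl1 (tl1 X)" by (simp add: X_def)
          also have "\<dots> = g k v2'" using v(2) kk(5) by simp
          finally show ?thesis using kk(3) kk(1) \<open>n1 = Suc m\<close> by blast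
        qed
      qed
      have "m < n" using Suc kk(1) by simp
      have "\<exists>cw\<in>CW k m (card C''). {v \<in> PS k m. g k v - C'' = B''} = Im k cw"
        by (rule less.IH[OF \<open>m < n\<close> hT2 disjT2])
      then obtain cw2 where cw2: "cw2 \<in> CW k m (card C'')" "{v \<in> PS k m. g k v - C'' = B''} = Im k cw2"
        by blast
      have "FK # cw2 \<in> CW k n (card C)" using cw2(1) Suc kk(1) cardC by (simp add: CW_def)
      moreover have "{v \<in> PS k n. g k v - C = B} = Im k (FK # cw2)"
      proof (rule set_eqI, rule iffI)
        fix v assume "v \<in> {v \<in> PS k n. g k v - C = B}"
        then have v: "v \<in> PS k (Suc n1)" "g k v - C = B" using Suc by auto
        have e: "hd0 (g k v) - hd0 C = hd0 B" "tl1 (g k v) - tl1 C = tl1 B"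
          using eq_splitD[OF v(2)] by auto
        from k1(1) v(1) show "v \<in> Im k (FK # cw2)"
        proof (cases rule: classify2)
          case (lt y v1)
          have "{1..y} = {1..k}" using e(1) unfolding lt(4) C0 hB(1) by simp
          then have "y = k" by (metis atLeast1_eq)
          then show ?thesis using lt(2) by simp
        next
          case (kk m' v2')
          have e2: "g k ((k-1)#v2') - C' = B'" using e(2) unfolding kk(5) C'_def B'_def .
          have "g k v2' - C'' = B''" using eq_splitD[OF e2] by (simp add: C''_def B''_def)
          then have "v2' \<in> Im k cw2" using kk(3) kk(1) \<open>n1 = Suc m\<close> by (subst cw2(2)[symmetric]) simp
          then show ?thesis using kk(2) by simp
        qed
      next
        fix v assume "v \<in> Im k (FK # cw2)"
        then obtain v'' where v'': "v = k#k#v''" "v'' \<in> Im k cw2"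
          by auto
        then have "v'' \<in> {v \<in> PS k m. g k v - C'' = B''}" by (subst cw2(2))
        then have v2: "v'' \<in> PS k m" "g k v'' - C'' = B''" by simp_all
        have tlC: "g k ((k-1)#v'') - C' = B'"
        proof (rule eq_splitI)
          show "hd0 (g k ((k - 1) # v'')) - hd0 C' = hd0 B'" using C1 hB'(1) by simp
          show "tl1 (g k ((k - 1) # v'')) - tl1 C' = tl1 B'" using v2(2) by (simp add: C''_def B''_def)
        qed
        have "v \<in> PS k n" using v''(1) v2(1) Suc kk(1) by (auto simp: PS_Suc)
        moreover have "g k v - C = B"
        proof (rule eq_splitI)
          show "hd0 (g k v) - hd0 C = hd0 B" using v''(1) C0 hB(1) ins_k[OF k1(1)] by simp
          show "tl1 (g k v) - tl1 C = tl1 B" using v''(1) tlC by (simp add: C'_def B'_def)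
        qed
        ultimately show "v \<in> {v \<in> PS k n. g k v - C = B}" by simp
      qed
      ultimately show ?thesis by blast
    qed
  qed
qed


fun E :: "nat \<Rightarrow> cl list \<Rightarrow> bool list \<Rightarrow> nat list" where
  "E k [] u = []"
| "E k (Fx x # cw) u = x # E k cw u"
| "E k (Ed i # cw) u = (if hd u then Suc i else i) # E k cw (tl u)"
| "E k (FK # cw) u = k # k # E k cw u"
| "E k (EK # cw) u = (if hd u then [k,k] else [k-1,k-1]) @ E k cw (tl u)"

abbreviation valid where "valid k cw \<equiv> (\<forall>c\<in>set cw. validc k c)"
abbreviation dms where "dms cw \<equiv> sum_list (map dm cw)"
abbreviation wts where "wts cw \<equiv> sum_list (map wt cw)"

lemma cube_verts_0: "cube_verts 0 = {[]}" by (auto simp: cube_verts_def)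
lemma cube_verts_Suc: "u \<in> cube_verts (Suc d) \<longleftrightarrow> (\<exists>p u'. u = p # u' \<and> u' \<in> cube_verts d)"
  by (cases u) (auto simp: cube_verts_def)

lemma E_image: "E k cw ` cube_verts (dms cw) = Im k cw"
proof (induction cw)
  case Nil then show ?case by (simp add: cube_verts_0)
next
  case (Cons c cw)
  show ?case
  proof (cases c)
    case (Fx x) then show ?thesis using Cons by (auto simp: image_image)
  next
    case (Ed i)
    have cv: "cube_verts (Suc (dms cw)) = Cons True ` cube_verts (dms cw) \<union> Cons False ` cube_verts (dms cw)"
      by (auto simp: cube_verts_Suc) (metis (full_types) image_eqI)+
    show ?thesis using Ed Cons[symmetric] by (simp add: cv image_Un image_image Un_commute)
  next
    case FK then show ?thesis using Cons by (auto simp: image_image)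
  next
    case EK
    have cv: "cube_verts (Suc (dms cw)) = Cons True ` cube_verts (dms cw) \<union> Cons False ` cube_verts (dms cw)"
      by (auto simp: cube_verts_Suc) (metis (full_types) image_eqI)+
    show ?thesis using EK Cons[symmetric] by (simp add: cv image_Un image_image Un_commute)
  qed
qed

lemma E_PS: "k \<ge> 1 \<Longrightarrow> valid k cw \<Longrightarrow> E k cw u \<in> PS k (wts cw)"
proof (induction cw arbitrary: u)
  case Nil then show ?case by (simp add: PS_def)
next
  case (Cons c cw)
  then have IH: "E k cw u' \<in> PS k (wts cw)" for u' by simp
  show ?case
  proof (cases c)
    case (Fx x) then show ?thesis using IH Cons.prems by (simp add: PS_Suc)
  next
    case (Ed i) then show ?thesis using IH Cons.prems by (simp add: PS_Suc)
  next
    case FK then show ?thesis using IH Cons.prems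
      by (simp add: PS_Suc numeral_2_eq_2)
  next
    case EK
    have "(k-1)#(k-1)#E k cw (tl u) \<in> PS k (Suc (Suc (wts cw)))"
      "k#k#E k cw (tl u) \<in> PS k (Suc (Suc (wts cw)))"
      using IH Cons.prems by (simp_all add: PS_Suc)
    then show ?thesis using EK by (simp add: numeral_2_eq_2)
  qed
qed

definition D :: "bool list \<Rightarrow> bool list \<Rightarrow> nat set" where
  "D u v = {j. j < length u \<and> u!j \<noteq> v!j}"

lemma D_Cons: "D (a#u) (b#v) = (if a = b then Suc ` D u v else insert 0 (Suc ` D u v))"
  unfolding D_def
  by (auto simp: image_def nth_Cons split: nat.splits) (metis Suc_less_eq Suc_pred nth_Cons_Suc)+

lemma finite_D: "finite (D u v)" by (simp add: D_def)

lemma cube_adj_D: "cube_adj u v \<longleftrightarrow> length u = length v \<and> card (D u v) = 1"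
  by (simp add: cube_adj_def D_def)

lemma D_empty: "length u = length v \<Longrightarrow> D u v = {} \<longleftrightarrow> u = v"
  unfolding D_def by (auto intro: nth_equalityI)

lemma cube_adj_Cons: "length u = length v \<Longrightarrow>
   cube_adj (a#u) (b#v) \<longleftrightarrow> (a = b \<and> cube_adj u v) \<or> (a \<noteq> b \<and> u = v)"
proof -
  assume l: "length u = length v"
  have cs: "card (Suc ` D u v) = card (D u v)" by (simp add: card_image)
  show ?thesis
  proof (cases "a = b")
    case True then show ?thesis using l cs by (simp add: cube_adj_D D_Cons)
  next
    case False
    have "card (insert 0 (Suc ` D u v)) = Suc (card (D u v))" using cs finite_D by auto
    moreover have "card (D u v) = 0 \<longleftrightarrow> u = v" using D_empty[OF l] finite_D by simp
    ultimately show ?thesis using False l by (simp add: cube_adj_D D_Cons)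
  qed
qed

lemma cube_adj_Nil: "\<not> cube_adj [] []" by (simp add: cube_adj_def)

lemma adj_same: "k \<ge> 1 \<Longrightarrow> pell_adj k (x#a) (x#b) \<longleftrightarrow> pell_adj k a b"
  by (simp add: pell_adj_def step_same)

lemma E_props:
  assumes k: "k \<ge> 2" and val: "valid k cw"
  shows "\<forall>u\<in>cube_verts (dms cw). \<forall>v\<in>cube_verts (dms cw).
     (E k cw u = E k cw v \<longleftrightarrow> u = v) \<and> (pell_adj k (E k cw u) (E k cw v) \<longleftrightarrow> cube_adj u v)"
  using val
proof (induction cw)
  case Nil
  then show ?case by (simp add: cube_verts_0 cube_adj_Nil pell_adj_def step_Nil1)
next
  case (Cons c cw)
  have k1: "k \<ge> 1" using k by simp
  have IH: "\<forall>u\<in>cube_verts (dms cw). \<forall>v\<in>cube_verts (dms cw).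
     (E k cw u = E k cw v \<longleftrightarrow> u = v) \<and> (pell_adj k (E k cw u) (E k cw v) \<longleftrightarrow> cube_adj u v)"
    using Cons by simp
  show ?case
  proof (cases c)
    case (Fx x) then show ?thesis using IH adj_same[OF k1] by simp
  next
    case FK then show ?thesis using IH adj_same[OF k1] by simp
  next
    case (Ed i)
    have ik: "Suc i < k" using Cons.prems Ed by simp
    show ?thesis
    proof (intro ballI)
      fix u v assume u: "u \<in> cube_verts (dms (c#cw))" and v: "v \<in> cube_verts (dms (c#cw))"
      then obtain p u' q v' where uv: "u = p#u'" "v = q#v'" "u' \<in> cube_verts (dms cw)" "v' \<in> cube_verts (dms cw)"
        using Ed by (auto simp: cube_verts_Suc)
      have len: "length u' = length v'" using uv by (simp add: cube_verts_def)
      have st1: "pell_step k (i # a) (Suc i # b) \<longleftrightarrow> a = b" for a b using ik by (auto simp: step_Cons)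
      have st2: "\<not> pell_step k (Suc i # b) (i # a)" for a b using ik by (auto simp: step_Cons)
      show "(E k (c#cw) u = E k (c#cw) v \<longleftrightarrow> u = v) \<and>
            (pell_adj k (E k (c#cw) u) (E k (c#cw) v) \<longleftrightarrow> cube_adj u v)"
      proof (cases "p = q")
        case True then show ?thesis using IH uv len Ed adj_same[OF k1] by (simp add: cube_adj_Cons)
      next
        case False
        then have "(p, q) = (True, False) \<or> (p, q) = (False, True)" by auto
        then show ?thesis using IH uv len Ed st1 st2 False
          by (auto simp: cube_adj_Cons pell_adj_def)
      qed
    qed
  next
    case EK
    show ?thesis
    proof (intro ballI)
      fix u v assume u: "u \<in> cube_verts (dms (c#cw))" and v: "v \<in> cube_verts (dms (c#cw))"
      then obtain p u' q v' where uv: "u = p#u'" "v = q#v'" "u' \<in> cube_verts (dms cw)" "v' \<in> cube_verts (dms cw)"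
        using EK by (auto simp: cube_verts_Suc)
      have len: "length u' = length v'" using uv by (simp add: cube_verts_def)
      have kk: "k - 1 \<noteq> k" using k by simp
      have st1: "pell_step k ((k-1)#(k-1)#a) (k#k#b) \<longleftrightarrow> a = b" for a b using kk by (auto simp: step_Cons)
      have st2: "\<not> pell_step k (k#k#b) ((k-1)#(k-1)#a)" for a b using k by (auto simp: step_Cons)
      show "(E k (c#cw) u = E k (c#cw) v \<longleftrightarrow> u = v) \<and>
            (pell_adj k (E k (c#cw) u) (E k (c#cw) v) \<longleftrightarrow> cube_adj u v)"
      proof (cases "p = q")
        case True then show ?thesis using IH uv len EK adj_same[OF k1] by (simp add: cube_adj_Cons)
      next
        case False
        then have "(p, q) = (True, False) \<or> (p, q) = (False, True)" by auto
        then show ?thesis using IH uv len EK st1 st2 False kk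
          by (auto simp: cube_adj_Cons pell_adj_def)
      qed
    qed
  qed
qed


fun firsts :: "nat \<Rightarrow> cl \<Rightarrow> nat set" where
  "firsts k (Fx x) = {x}" | "firsts k (Ed i) = {i, Suc i}" | "firsts k FK = {k}" | "firsts k EK = {k-1, k}"

lemma Im_ne: "Im k cw \<noteq> {}"
  by (induction k cw rule: Im.induct) auto

lemma Nil_in_Im: "[] \<in> Im k cw \<longleftrightarrow> cw = []"
  by (cases "(k,cw)" rule: Im.cases) auto

lemma hd_Im: "hd ` Im k (c#cw) = firsts k c"
  using Im_ne[of k cw] by (cases c) (auto simp: image_image image_Un)

fun drp :: "cl \<Rightarrow> nat" where
  "drp (Fx x) = 1" | "drp (Ed i) = 1" | "drp FK = 2" | "drp EK = 2"

lemma drop_Im: "drop (drp c) ` Im k (c#cw) = Im k cw"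
  by (cases c) (auto simp: image_image image_Un numeral_2_eq_2)

lemma firsts_inj: "k \<ge> 2 \<Longrightarrow> validc k c1 \<Longrightarrow> validc k c2 \<Longrightarrow> firsts k c1 = firsts k c2 \<Longrightarrow> c1 = c2"
  by (cases c1; cases c2) (auto simp: doubleton_eq_iff)

lemma Im_inj: "k \<ge> 2 \<Longrightarrow> valid k cw1 \<Longrightarrow> valid k cw2 \<Longrightarrow> Im k cw1 = Im k cw2 \<Longrightarrow> cw1 = cw2"
proof (induction cw1 arbitrary: cw2)
  case Nil
  have "[] \<in> Im k cw2" using Nil.prems(4) by (metis Im.simps(1) singletonI)
  then show ?case using Nil_in_Im[of k cw2] by simp
next
  case (Cons c1 r1)
  note IH = Cons.IH and pr = Cons.prems
  show ?case
  proof (cases cw2)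
    case Nil then show ?thesis using pr Nil_in_Im[of k "c1#r1"] by simp
  next
    case (Cons c2 r2)
    note cw2 = this
    have "hd ` Im k (c1#r1) = hd ` Im k (c2#r2)" using pr(4) cw2 by simp
    then have "firsts k c1 = firsts k c2" by (simp only: hd_Im)
    moreover have "validc k c1" "validc k c2" using pr(2,3) cw2 by auto
    ultimately have c: "c1 = c2" using firsts_inj pr(1) by blast
    have "drop (drp c1) ` Im k (c1#r1) = drop (drp c2) ` Im k (c2#r2)" using pr(4) cw2 c by simp
    then have "Im k r1 = Im k r2" by (simp only: drop_Im)
    moreover have "valid k r1" "valid k r2" using pr(2,3) cw2 by auto
    ultimately have "r1 = r2" using IH pr(1) by blast
    then show ?thesis using cw2 c by simp
  qed
qed


definition Cnt :: "nat \<Rightarrow> nat \<Rightarrow> nat \<Rightarrow> nat list set set" where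
  "Cnt k n d = {S. S \<subseteq> PS k n \<and> (\<exists>f. bij_betw f (cube_verts d) S \<and>
      (\<forall>u\<in>cube_verts d. \<forall>v\<in>cube_verts d. pell_adj k (f u) (f v) \<longleftrightarrow> cube_adj u v))}"

lemma pell_strings_PS: "pell_strings n k = PS k n"
  by (simp add: pell_strings_eq PS_def)

lemma cube_count_Cnt: "cube_count (pell_strings n k) (pell_adj k) d = card (Cnt k n d)"
  by (simp add: cube_count_def Cnt_def pell_strings_PS)

lemma sd_ins_single: "c \<notin> Y \<Longrightarrow> sd (insert c Y) {c} = Y" by (auto simp: sd_def)
lemma sd_empty_left: "sd {} X = X" by (auto simp: sd_def)
lemma sd_sub_diff: "Z \<subseteq> C \<Longrightarrow> sd H Z - C = H - C" by (auto simp: sd_def)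

lemma Cnt_sup: assumes k: "k \<ge> 2" shows "Im k ` CW k n d \<subseteq> Cnt k n d"
proof
  fix S assume "S \<in> Im k ` CW k n d"
  then obtain cw where cw: "cw \<in> CW k n d" "S = Im k cw" by blast
  have val: "valid k cw" and wn: "wts cw = n" and dd: "dms cw = d" using cw(1) by (auto simp: CW_def)
  have P: "\<forall>u\<in>cube_verts d. \<forall>v\<in>cube_verts d.
     (E k cw u = E k cw v \<longleftrightarrow> u = v) \<and> (pell_adj k (E k cw u) (E k cw v) \<longleftrightarrow> cube_adj u v)"
    using E_props[OF k val] dd by simp
  have img: "E k cw ` cube_verts d = S" using E_image[of k cw] dd cw(2) by simp
  have "inj_on (E k cw) (cube_verts d)" using P by (auto simp: inj_on_def)
  then have "bij_betw (E k cw) (cube_verts d) S" using img by (simp add: bij_betw_def)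
  moreover have "S \<subseteq> PS k n" using img E_PS[of k cw] val wn k by auto
  ultimately show "S \<in> Cnt k n d" using P unfolding Cnt_def by blast
qed

lemma Cnt_sub: assumes k: "k \<ge> 2" shows "Cnt k n d \<subseteq> Im k ` CW k n d"
proof
  fix S assume "S \<in> Cnt k n d"
  then obtain f where SP: "S \<subseteq> PS k n" and bij: "bij_betw f (cube_verts d) S"
    and adj: "\<forall>u\<in>cube_verts d. \<forall>v\<in>cube_verts d. pell_adj k (f u) (f v) \<longleftrightarrow> cube_adj u v"
    unfolding Cnt_def by blast
  have k1: "k \<ge> 1" using k by simp
  have fS: "f ` cube_verts d = S" and finj: "inj_on f (cube_verts d)" using bij by (auto simp: bij_betw_def)
  have fP: "f u \<in> PS k n" if "u \<in> cube_verts d" for u using that fS SP by blast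
  define h where "h u = g k (f u)" for u
  have ginj: "v = v'" if "v \<in> PS k n" "v' \<in> PS k n" "g k v = g k v'" for v v'
    using g_inj[OF k1, of v v'] that by (simp add: PS_def)
  have hinj: "inj_on h (cube_verts d)"
  proof (rule inj_onI)
    fix u v assume uv: "u \<in> cube_verts d" "v \<in> cube_verts d" "h u = h v"
    then have "f u = f v" using ginj fP by (simp add: h_def)
    then show "u = v" using finj uv by (meson inj_onD)
  qed
  have hadj: "\<exists>a. h v = sd (h u) {a}" if uv: "u \<in> cube_verts d" "v \<in> cube_verts d" "cube_adj u v" for u v
  proof -
    have pa: "pell_adj k (f u) (f v)" using adj uv by blast
    have isp: "ispell k (f u)" "ispell k (f v)" using fP uv by (auto simp: PS_def)
    show ?thesis
    proof (cases "pell_step k (f u) (f v)")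
      case True
      then obtain c where c: "c \<notin> g k (f u)" "g k (f v) = insert c (g k (f u))"
        using step_g[OF k isp] by blast
      then show ?thesis by (intro exI[of _ c]) (simp add: h_def sd_single)
    next
      case False
      then have "pell_step k (f v) (f u)" using pa by (simp add: pell_adj_def)
      then obtain c where c: "c \<notin> g k (f v)" "g k (f u) = insert c (g k (f v))"
        using step_g[OF k isp(2) isp(1)] by blast
      then show ?thesis by (intro exI[of _ c]) (simp add: h_def sd_ins_single)
    qed
  qed
  obtain c where cinj: "inj_on c {..<d}"
    and hc: "\<forall>u\<in>cube_verts d. h u = sd (h (replicate d False)) (c ` {j. j<d \<and> u!j})"
    using face[OF hinj hadj] by blast
  define H0 where "H0 = h (replicate d False)"
  define C where "C = c ` {..<d}"
  define B where "B = H0 - C"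
  have cardC: "card C = d" using cinj by (simp add: C_def card_image)
  have disj: "B \<inter> C = {}" by (auto simp: B_def)
  have claim: "\<exists>u\<in>cube_verts d. X = h u" if X: "X - C = B" for X
  proof -
    define J where "J = {j. j < d \<and> c j \<in> sd H0 X}"
    define u where "u = map (\<lambda>j. j \<in> J) [0..<d]"
    have u: "u \<in> cube_verts d" by (simp add: u_def cube_verts_def)
    have Tu: "{j. j<d \<and> u!j} = J" by (auto simp: u_def J_def)
    have sdC: "sd H0 X \<subseteq> C" using X by (auto simp: B_def sd_def)
    have "c ` J = sd H0 X"
    proof
      show "c ` J \<subseteq> sd H0 X" by (auto simp: J_def)
      show "sd H0 X \<subseteq> c ` J"
      proof
        fix y assume y: "y \<in> sd H0 X"
        then obtain j where "j < d" "y = c j" using sdC by (auto simp: C_def)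
        then show "y \<in> c ` J" using y by (auto simp: J_def)
      qed
    qed
    then have "h u = sd H0 (sd H0 X)" using hc u Tu by (simp add: H0_def)
    also have "\<dots> = X" by (simp add: sd_assoc[symmetric] sd_empty_left)
    finally show ?thesis using u by metis
  qed
  have hyp: "\<forall>X. X - C = B \<longrightarrow> X \<in> g k ` PS k n"
  proof (intro allI impI)
    fix X assume "X - C = B"
    then obtain u where "u \<in> cube_verts d" "X = h u" using claim by blast
    then show "X \<in> g k ` PS k n" using fP by (auto simp: h_def)
  qed
  obtain cw where cw: "cw \<in> CW k n (card C)" "{v \<in> PS k n. g k v - C = B} = Im k cw"
    using main[OF k hyp disj] by blast
  have "S = {v \<in> PS k n. g k v - C = B}"
  proof
    show "S \<subseteq> {v \<in> PS k n. g k v - C = B}"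
    proof
      fix v assume "v \<in> S"
      then obtain u where u: "u \<in> cube_verts d" "v = f u" using fS by blast
      have "g k v = sd H0 (c ` {j. j<d \<and> u!j})" using hc u by (simp add: h_def H0_def)
      moreover have "c ` {j. j<d \<and> u!j} \<subseteq> C" by (auto simp: C_def)
      ultimately have "g k v - C = B" by (simp add: sd_sub_diff B_def)
      then show "v \<in> {v \<in> PS k n. g k v - C = B}" using fP u by simp
    qed
    show "{v \<in> PS k n. g k v - C = B} \<subseteq> S"
    proof
      fix v assume v: "v \<in> {v \<in> PS k n. g k v - C = B}"
      then obtain u where u: "u \<in> cube_verts d" "g k v = h u" using claim by blast
      then have "v = f u" using ginj fP v by (simp add: h_def)
      then show "v \<in> S" using fS u by blast
    qed
  qed
  then show "S \<in> Im k ` CW k n d" using cw cardC by auto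
qed

lemma card_Cnt: assumes k: "k \<ge> 2" shows "card (Cnt k n d) = card (CW k n d)"
proof -
  have "Cnt k n d = Im k ` CW k n d" using Cnt_sub[OF k] Cnt_sup[OF k] by blast
  moreover have "inj_on (Im k) (CW k n d)"
    by (rule inj_onI) (use Im_inj[OF k] in \<open>auto simp: CW_def\<close>)
  ultimately show ?thesis by (simp add: card_image)
qed


lemma len_le_wts: "length cw \<le> wts cw"
proof (induction cw)
  case (Cons c cw) then show ?case by (cases c) auto
qed simp

lemma finite_CW: "finite (CW k n d)"
proof -
  define L where "L = Fx ` {..<k} \<union> Ed ` {..<k} \<union> {FK, EK}"
  have "CW k n d \<subseteq> {xs. set xs \<subseteq> L \<and> length xs \<le> n}"
  proof
    fix cw assume cw: "cw \<in> CW k n d"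
    have "set cw \<subseteq> L"
    proof
      fix c assume "c \<in> set cw"
      then have "validc k c" using cw by (auto simp: CW_def)
      then show "c \<in> L" by (cases c) (auto simp: L_def)
    qed
    moreover have "length cw \<le> n" using cw len_le_wts[of cw] by (simp add: CW_def)
    ultimately show "cw \<in> {xs. set xs \<subseteq> L \<and> length xs \<le> n}" by simp
  qed
  moreover have "finite {xs. set xs \<subseteq> L \<and> length xs \<le> n}"
    by (rule finite_lists_length_le) (simp add: L_def)
  ultimately show ?thesis by (rule finite_subset)
qed

lemma CW_0: "CW k 0 d = (if d = 0 then {[]} else {})"
proof -
  have "cw \<in> CW k 0 d \<longleftrightarrow> cw = [] \<and> d = 0" for cw
  proof (cases cw)
    case (Cons c r) then show ?thesis by (cases c) (auto simp: CW_def)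
  qed (auto simp: CW_def)
  then show ?thesis by auto
qed

lemma CW_Suc_mem: "cw \<in> CW k (Suc n) d \<longleftrightarrow>
   (\<exists>x r. cw = Fx x # r \<and> x < k \<and> r \<in> CW k n d) \<or>
   (\<exists>i r. cw = Ed i # r \<and> i < k - 1 \<and> d \<ge> 1 \<and> r \<in> CW k n (d-1)) \<or>
   (\<exists>r. cw = FK # r \<and> n \<ge> 1 \<and> r \<in> CW k (n-1) d) \<or>
   (\<exists>r. cw = EK # r \<and> n \<ge> 1 \<and> d \<ge> 1 \<and> r \<in> CW k (n-1) (d-1))"
proof (cases cw)
  case Nil then show ?thesis by (auto simp: CW_def)
next
  case (Cons c r)
  then show ?thesis by (cases c) (auto simp: CW_Cons)
qed

lemma card_CW_Suc:
  "card (CW k (Suc n) d) = k * card (CW k n d) + (if d \<ge> 1 then (k-1) * card (CW k n (d-1)) else 0)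
     + (if n \<ge> 1 then card (CW k (n-1) d) else 0) + (if n \<ge> 1 \<and> d \<ge> 1 then card (CW k (n-1) (d-1)) else 0)"
proof -
  define F1 where "F1 = (\<lambda>(x,r). Fx x # r) ` ({..<k} \<times> CW k n d)"
  define F2 where "F2 = (if d \<ge> 1 then (\<lambda>(i,r). Ed i # r) ` ({..<k-1} \<times> CW k n (d-1)) else {})"
  define F3 where "F3 = (if n \<ge> 1 then Cons FK ` CW k (n-1) d else {})"
  define F4 where "F4 = (if n \<ge> 1 \<and> d \<ge> 1 then Cons EK ` CW k (n-1) (d-1) else {})"
  have eq: "CW k (Suc n) d = F1 \<union> F2 \<union> F3 \<union> F4"
    by (rule set_eqI, subst CW_Suc_mem) (auto simp: F1_def F2_def F3_def F4_def)
  have c1: "card F1 = k * card (CW k n d)"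
    unfolding F1_def by (subst card_image) (auto simp: inj_on_def card_cartesian_product)
  have c2: "card F2 = (if d \<ge> 1 then (k-1) * card (CW k n (d-1)) else 0)"
    unfolding F2_def by (auto simp: card_image inj_on_def card_cartesian_product)
  have c3: "card F3 = (if n \<ge> 1 then card (CW k (n-1) d) else 0)"
    unfolding F3_def by (auto simp: card_image)
  have c4: "card F4 = (if n \<ge> 1 \<and> d \<ge> 1 then card (CW k (n-1) (d-1)) else 0)"
    unfolding F4_def by (auto simp: card_image)
  have fin: "finite F1" "finite F2" "finite F3" "finite F4"
    by (auto simp: F1_def F2_def F3_def F4_def finite_CW)
  have d12: "F1 \<inter> F2 = {}" by (auto simp: F1_def F2_def)
  have d3: "(F1 \<union> F2) \<inter> F3 = {}" by (auto simp: F1_def F2_def F3_def)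
  have d4: "(F1 \<union> F2 \<union> F3) \<inter> F4 = {}" by (auto simp: F1_def F2_def F3_def F4_def)
  have "card (F1 \<union> F2 \<union> F3 \<union> F4) = card F1 + card F2 + card F3 + card F4"
    using fin d12 d3 d4 by (simp add: card_Un_disjoint)
  then show ?thesis using eq c1 c2 c3 c4 by simp
qed


lemma ispell_le: "ispell k w \<Longrightarrow> \<forall>x\<in>set w. x \<le> k"
  by (induction k w rule: ispell.induct) (auto split: if_splits)

lemma finite_PS: "finite (PS k m)"
proof -
  have "PS k m \<subseteq> {xs. set xs \<subseteq> {0..k} \<and> length xs = m}"
    using ispell_le by (fastforce simp: PS_def)
  moreover have "finite {xs. set xs \<subseteq> {0..k} \<and> length xs = m}"
    by (rule finite_lists_length_eq) simp
  ultimately show ?thesis by (rule finite_subset)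
qed

lemma card_cube_verts: "card (cube_verts j) = 2 ^ j"
proof -
  have e: "cube_verts j = {xs. set xs \<subseteq> (UNIV::bool set) \<and> length xs = j}" by (simp add: cube_verts_def)
  have "card {xs. set xs \<subseteq> (UNIV::bool set) \<and> length xs = j} = card (UNIV::bool set) ^ j"
    by (rule card_lists_length_eq) simp
  then show ?thesis unfolding e by simp
qed

lemma Cnt_big: "card (PS k m) < j \<Longrightarrow> Cnt k m j = {}"
proof (rule ccontr)
  assume j: "card (PS k m) < j" and "Cnt k m j \<noteq> {}"
  then obtain S f where S: "S \<subseteq> PS k m" "bij_betw f (cube_verts j) S" unfolding Cnt_def by blast
  have "card S = 2 ^ j" using bij_betw_same_card[OF S(2)] card_cube_verts by simp
  moreover have "card S \<le> card (PS k m)" using S(1) finite_PS by (rule card_mono[rotated])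
  moreover have "j < 2 ^ j" by (rule less_exp)
  ultimately show False using j by linarith
qed

lemma coeff_P: assumes k: "k \<ge> 2"
  shows "coeff (pell_cube_poly m k) j = int (card (CW k m j))"
proof -
  have "coeff (pell_cube_poly m k) j =
     (\<Sum>i\<le>card (pell_strings m k). if i = j then int (cube_count (pell_strings m k) (pell_adj k) i) else 0)"
    by (simp add: pell_cube_poly_def cube_poly_def coeff_sum coeff_monom)
  also have "\<dots> = (if j \<le> card (pell_strings m k) then int (cube_count (pell_strings m k) (pell_adj k) j) else 0)"
    by (subst sum.delta) auto
  also have "\<dots> = int (card (CW k m j))"
  proof (cases "j \<le> card (pell_strings m k)")
    case True then show ?thesis by (simp add: cube_count_Cnt card_Cnt[OF k])
  next
    case False
    then have "Cnt k m j = {}" by (intro Cnt_big) (simp add: pell_strings_PS)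
    then have "card (CW k m j) = 0" using card_Cnt[OF k, of m j] by simp
    then show ?thesis using False by simp
  qed
  finally show ?thesis .
qed

lemma lin_coeff: "coeff ([:a0, a1:] * p) j = a0 * coeff p j + (if j = 0 then 0 else a1 * coeff p (j - 1))"
proof -
  have "[:a0, a1:] * p = smult a0 p + pCons 0 (smult a1 p)" by simp
  then show ?thesis by (cases j) simp_all
qed

lemma P_rec: assumes k: "k \<ge> 2"
  shows "pell_cube_poly (Suc (Suc m)) k =
     [:int k, int k - 1:] * pell_cube_poly (Suc m) k + [:1, 1:] * pell_cube_poly m k"
proof (rule poly_eqI)
  fix j
  obtain q where q: "k = Suc q" using k by (cases k) auto
  have ik: "int k - 1 = int q" using q by simp
  show "coeff (pell_cube_poly (Suc (Suc m)) k) j =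
        coeff ([:int k, int k - 1:] * pell_cube_poly (Suc m) k + [:1, 1:] * pell_cube_poly m k) j"
  proof (cases j)
    case 0
    have r: "card (CW k (Suc (Suc m)) 0) = k * card (CW k (Suc m) 0) + card (CW k m 0)"
      using card_CW_Suc[of k "Suc m" 0] by simp
    show ?thesis unfolding coeff_add lin_coeff coeff_P[OF k] 0 r by simp
  next
    case (Suc j')
    have r: "card (CW k (Suc (Suc m)) (Suc j')) = k * card (CW k (Suc m) (Suc j')) + q * card (CW k (Suc m) j')
       + card (CW k m (Suc j')) + card (CW k m j')"
      using card_CW_Suc[of k "Suc m" "Suc j'"] q by simp
    show ?thesis unfolding coeff_add lin_coeff coeff_P[OF k] Suc r ik by simp
  qed
qed

lemma P_0: assumes k: "k \<ge> 2" shows "pell_cube_poly 0 k = 1"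
  by (rule poly_eqI) (simp add: coeff_P[OF k] CW_0 coeff_1)

lemma P_1: assumes k: "k \<ge> 2" shows "pell_cube_poly (Suc 0) k = [:int k, int k - 1:]"
proof (rule poly_eqI)
  fix j
  obtain q where q: "k = Suc q" using k by (cases k) auto
  have ik: "int k - 1 = int q" using q by simp
  have r: "card (CW k (Suc 0) j) = k * card (CW k 0 j) + (if j \<ge> 1 then q * card (CW k 0 (j-1)) else 0)"
    using card_CW_Suc[of k 0 j] q by simp
  show "coeff (pell_cube_poly (Suc 0) k) j = coeff [:int k, int k - 1:] j"
    unfolding coeff_P[OF k] r ik
    by (cases j) (auto simp: CW_0 coeff_pCons split: nat.splits)
qed

theorem proposition5p2:
  fixes k :: nat
  assumes "k \<ge> 2"
  shows "Abs_fps (\<lambda>n. pell_cube_poly n k) *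
           (1 - fps_const [:int k, int k - 1:] * fps_X - fps_const [:1, 1:] * fps_X ^ 2) = 1"
proof -
  define F where "F = Abs_fps (\<lambda>n. pell_cube_poly n k)"
  define a where "a = [:int k, int k - 1:]"
  define b where "b = ([:1, 1:] :: int poly)"
  have eq: "F * (1 - fps_const a * fps_X - fps_const b * fps_X ^ 2) =
      F - fps_const a * (fps_X * F) - fps_const b * (fps_X ^ 2 * F)"
    by (simp add: algebra_simps)
  have "F - fps_const a * (fps_X * F) - fps_const b * (fps_X ^ 2 * F) = 1"
  proof (rule fps_ext)
    fix m
    have c: "fps_nth (F - fps_const a * (fps_X * F) - fps_const b * (fps_X ^ 2 * F)) m =
      pell_cube_poly m k - a * (if m = 0 then 0 else pell_cube_poly (m - 1) k)
        - b * (if m < 2 then 0 else pell_cube_poly (m - 2) k)"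
      by (simp add: fps_X_power_mult_nth F_def)
    show "fps_nth (F - fps_const a * (fps_X * F) - fps_const b * (fps_X ^ 2 * F)) m = fps_nth 1 m"
    proof (cases m)
      case 0 then show ?thesis using c P_0[OF assms] by (simp add: F_def)
    next
      case (Suc m1)
      show ?thesis
      proof (cases m1)
        case 0 then show ?thesis using c Suc P_0[OF assms] P_1[OF assms] by (simp add: a_def F_def)
      next
        case (Suc m2)
        then show ?thesis using c \<open>m = Suc m1\<close> P_rec[OF assms, of m2] by (simp add: a_def b_def F_def)
      qed
    qed
  qed
  then show ?thesis using eq by (simp add: F_def a_def b_def)
qed


end
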